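(* Let $M$ be a finite generic metric space and let $0<r<\min\{s(M)/4,\ e(M)/4,\ t(M)/6\}$. Then the sphere $\{Y\in\mathcal{M}: d_{GH}(M,Y)=r\}$ in $\mathcal{M}$ is path connected (as a subspace of the metric space $(\mathcal{M},d_{GH})$).
   Context: For a metric space $M$ with $\#M\ge3$: $s(M)=\inf\{|xx'|: x\ne x'\}$; $t(M)=\inf\{|xx'|+|x'x''|-|xx''|: x,x',x''\text{ pairwise distinct}\}$; $e(M)=\inf\{\operatorname{dis}f: f\colon M\to M \text{ bijective}, f\ne\mathrm{id}\}$, where $\operatorname{dis}f=\sup_{x,x'}||xx'|-|f(x)f(x')||$. $M$ is called generic if $\#M\ge3$ and $s(M),t(M),e(M)$ are all positive. $\mathcal{M}$ denotes the set of isometry classes of compact metric spaces endowed with the Gromov–Hausdorff distance $d_{GH}$ (a metric on $\mathcal{M}$): $d_{GH}(X,Y)$ is the infimum of $r$ such that there exist a metric space $Z$ and subsets $X',Y'\subset Z$ isometric to $X,Y$ with Hausdorff distance $d_H(X',Y')\le r$. *)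

theory Defs
  imports "HOL-Analysis.Analysis"
begin

text \<open>Every compact metric space has cardinality at most the continuum, hence is isometric to one
  whose carrier is a subset of the type real; so isometry classes of compact metric spaces are
  exactly isometry classes of values of type real metric that are compact.\<close>

type_synonym mspc = "real metric"

definition cms :: "mspc \<Rightarrow> bool" where
  "cms X \<longleftrightarrow> mspace X \<noteq> {} \<and> compact_space (mtopology_of X)"

definition isom_embed :: "'a metric \<Rightarrow> 'b metric \<Rightarrow> ('a \<Rightarrow> 'b) \<Rightarrow> bool" where
  "isom_embed X Z f \<longleftrightarrow> f ` mspace X \<subseteq> mspace Z \<and>
     (\<forall>x\<in>mspace X. \<forall>y\<in>mspace X. mdist Z (f x) (f y) = mdist X x y)"

definition isometric :: "'a metric \<Rightarrow> 'b metric \<Rightarrow> bool" where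
  "isometric X Y \<longleftrightarrow> (\<exists>f. bij_betw f (mspace X) (mspace Y) \<and>
     (\<forall>x\<in>mspace X. \<forall>y\<in>mspace X. mdist Y (f x) (f y) = mdist X x y))"

definition hdist :: "'a metric \<Rightarrow> 'a set \<Rightarrow> 'a set \<Rightarrow> real" where
  "hdist Z A B = max (SUP a\<in>A. INF b\<in>B. mdist Z a b) (SUP b\<in>B. INF a\<in>A. mdist Z a b)"

text \<open>Gromov--Hausdorff distance; the ambient space Z may w.l.o.g. be taken with carrier
  in the type real (replace Z by the union of the two images, of cardinality at most continuum).\<close>
definition dGH :: "mspc \<Rightarrow> mspc \<Rightarrow> real" where
  "dGH X Y = Inf {r. \<exists>(Z::real metric) f g. isom_embed X Z f \<and> isom_embed Y Z g \<and>
                        hdist Z (f ` mspace X) (g ` mspace Y) \<le> r}"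

definition s_inv :: "'a metric \<Rightarrow> real" where
  "s_inv M = Inf {mdist M x x' | x x'. x \<in> mspace M \<and> x' \<in> mspace M \<and> x \<noteq> x'}"

definition t_inv :: "'a metric \<Rightarrow> real" where
  "t_inv M = Inf {mdist M x x' + mdist M x' x'' - mdist M x x'' | x x' x''.
       x \<in> mspace M \<and> x' \<in> mspace M \<and> x'' \<in> mspace M \<and> x \<noteq> x' \<and> x' \<noteq> x'' \<and> x \<noteq> x''}"

definition dis :: "'a metric \<Rightarrow> ('a \<Rightarrow> 'a) \<Rightarrow> real" where
  "dis M f = (SUP p\<in>mspace M \<times> mspace M. \<bar>mdist M (fst p) (snd p) - mdist M (f (fst p)) (f (snd p))\<bar>)"

definition e_inv :: "'a metric \<Rightarrow> real" where
  "e_inv M = Inf {dis M f | f. bij_betw f (mspace M) (mspace M) \<and> (\<exists>x\<in>mspace M. f x \<noteq> x)}"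

definition generic :: "'a metric \<Rightarrow> bool" where
  "generic M \<longleftrightarrow> card (mspace M) \<ge> 3 \<and> s_inv M > 0 \<and> t_inv M > 0 \<and> e_inv M > 0"

text \<open>Path connectedness of a subset S of the Gromov--Hausdorff space (isometry classes of
  compact metric spaces with metric dGH), expressed through representatives: any two members
  are joined by a dGH-continuous path in S, endpoints up to isometry.\<close>
definition GH_path_connected :: "(mspc \<Rightarrow> bool) \<Rightarrow> bool" where
  "GH_path_connected S \<longleftrightarrow>
     (\<forall>Y1 Y2. S Y1 \<and> S Y2 \<longrightarrow>
        (\<exists>\<gamma>::real \<Rightarrow> mspc.
           (\<forall>t\<in>{0..1}. S (\<gamma> t)) \<and>
           (\<forall>t\<in>{0..1}. \<forall>\<epsilon>>0. \<exists>\<delta>>0. \<forall>t'\<in>{0..1}. \<bar>t' - t\<bar> < \<delta> \<longrightarrow> dGH (\<gamma> t) (\<gamma> t') < \<epsilon>) \<and>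
           isometric (\<gamma> 0) Y1 \<and> isometric (\<gamma> 1) Y2))"

end

theory Submission
  imports Defs
begin

lemma cms_bounded:
  assumes "cms X" shows "\<exists>B. \<forall>x\<in>mspace X. \<forall>y\<in>mspace X. mdist X x y \<le> B"
proof -
  have "compactin (mtopology_of X) (mspace X)"
    using assms unfolding cms_def compact_space_def by simp
  hence "Metric_space.mbounded (mspace X) (mdist X) (mspace X)"
    by (simp add: Metric_space.compactin_imp_mbounded mtopology_of_def)
  thus ?thesis by (simp add: Metric_space.mbounded_alt)
qed

lemma INF_le_pt:
  assumes "b \<in> B" "\<forall>b\<in>B. (0::real) \<le> f b"
  shows "(INF b\<in>B. f b) \<le> f b"
  by (rule cINF_lower[OF _ assms(1)]) (use assms(2) in \<open>auto intro: bdd_belowI2\<close>)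

lemma hdist_ge0:
  assumes "A \<noteq> {}" "B \<noteq> {}" "\<forall>a\<in>A. \<forall>b\<in>B. mdist Z a b \<le> K"
  shows "0 \<le> hdist Z A B"
proof -
  obtain a0 where a0: "a0 \<in> A" using assms by auto
  obtain b0 where b0: "b0 \<in> B" using assms by auto
  have bdd: "bdd_above ((\<lambda>a. INF b\<in>B. mdist Z a b) ` A)"
  proof (rule bdd_aboveI2)
    fix a assume "a \<in> A"
    have "(INF b\<in>B. mdist Z a b) \<le> mdist Z a b0" by (rule INF_le_pt[OF b0]) simp
    also have "\<dots> \<le> K" using assms(3) \<open>a\<in>A\<close> b0 by auto
    finally show "(INF b\<in>B. mdist Z a b) \<le> K" .
  qed
  have "0 \<le> (INF b\<in>B. mdist Z a0 b)" by (rule cINF_greatest[OF assms(2)]) simp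
  also have "\<dots> \<le> (SUP a\<in>A. INF b\<in>B. mdist Z a b)" by (rule cSUP_upper[OF a0 bdd])
  finally show ?thesis unfolding hdist_def by simp
qed

lemma hdist_le:
  assumes "A \<noteq> {}" "B \<noteq> {}"
    and "\<forall>a\<in>A. \<exists>b\<in>B. mdist Z a b \<le> c" "\<forall>b\<in>B. \<exists>a\<in>A. mdist Z a b \<le> c"
  shows "hdist Z A B \<le> c"
proof -
  have 1: "(SUP a\<in>A. INF b\<in>B. mdist Z a b) \<le> c"
  proof (rule cSUP_least[OF assms(1)])
    fix a assume "a \<in> A"
    then obtain b where "b \<in> B" "mdist Z a b \<le> c" using assms(3) by auto
    thus "(INF b\<in>B. mdist Z a b) \<le> c" using INF_le_pt[of b B "\<lambda>b. mdist Z a b"] by simp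
  qed
  have 2: "(SUP b\<in>B. INF a\<in>A. mdist Z a b) \<le> c"
  proof (rule cSUP_least[OF assms(2)])
    fix b assume "b \<in> B"
    then obtain a where "a \<in> A" "mdist Z a b \<le> c" using assms(4) by auto
    thus "(INF a\<in>A. mdist Z a b) \<le> c" using INF_le_pt[of a A "\<lambda>a. mdist Z a b"] by simp
  qed
  show ?thesis using 1 2 unfolding hdist_def by simp
qed

lemma hdist_lt:
  assumes "A \<noteq> {}" "B \<noteq> {}" "\<forall>a\<in>A. \<forall>b\<in>B. mdist Z a b \<le> K"
    and "hdist Z A B < \<rho>"
  shows "(\<forall>a\<in>A. \<exists>b\<in>B. mdist Z a b < \<rho>) \<and> (\<forall>b\<in>B. \<exists>a\<in>A. mdist Z a b < \<rho>)"
proof (intro conjI ballI)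
  fix a assume a: "a \<in> A"
  obtain b0 where b0: "b0 \<in> B" using assms by auto
  have bdd: "bdd_above ((\<lambda>a. INF b\<in>B. mdist Z a b) ` A)"
  proof (rule bdd_aboveI2)
    fix a assume "a \<in> A"
    have "(INF b\<in>B. mdist Z a b) \<le> mdist Z a b0" by (rule INF_le_pt[OF b0]) simp
    also have "\<dots> \<le> K" using assms(3) \<open>a\<in>A\<close> b0 by auto
    finally show "(INF b\<in>B. mdist Z a b) \<le> K" .
  qed
  have "(INF b\<in>B. mdist Z a b) \<le> (SUP a\<in>A. INF b\<in>B. mdist Z a b)" by (rule cSUP_upper[OF a bdd])
  also have "\<dots> \<le> hdist Z A B" unfolding hdist_def by simp
  finally have "(INF b\<in>B. mdist Z a b) < \<rho>" using assms(4) by simp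
  moreover have "bdd_below ((\<lambda>b. mdist Z a b) ` B)" by (rule bdd_belowI[where m=0]) auto
  ultimately show "\<exists>b\<in>B. mdist Z a b < \<rho>" using cINF_less_iff[OF assms(2)] by blast
next
  fix b assume b: "b \<in> B"
  obtain a0 where a0: "a0 \<in> A" using assms by auto
  have bdd: "bdd_above ((\<lambda>b. INF a\<in>A. mdist Z a b) ` B)"
  proof (rule bdd_aboveI2)
    fix b assume "b \<in> B"
    have "(INF a\<in>A. mdist Z a b) \<le> mdist Z a0 b" by (rule INF_le_pt[OF a0]) simp
    also have "\<dots> \<le> K" using assms(3) \<open>b\<in>B\<close> a0 by auto
    finally show "(INF a\<in>A. mdist Z a b) \<le> K" .
  qed
  have "(INF a\<in>A. mdist Z a b) \<le> (SUP b\<in>B. INF a\<in>A. mdist Z a b)" by (rule cSUP_upper[OF b bdd])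
  also have "\<dots> \<le> hdist Z A B" unfolding hdist_def by simp
  finally have "(INF a\<in>A. mdist Z a b) < \<rho>" using assms(4) by simp
  moreover have "bdd_below ((\<lambda>a. mdist Z a b) ` A)" by (rule bdd_belowI[where m=0]) auto
  ultimately show "\<exists>a\<in>A. mdist Z a b < \<rho>" using cINF_less_iff[OF assms(1)] by blast
qed

definition hh :: "real + real \<Rightarrow> real" where
  "hh w = (case w of Inl x \<Rightarrow> arctan x | Inr y \<Rightarrow> arctan y + 4)"
definition gg :: "real \<Rightarrow> real + real" where
  "gg u = (if u < 2 then Inl (tan u) else Inr (tan (u - 4)))"

lemma gg_hh [simp]: "gg (hh w) = w"
proof (cases w)
  case (Inl x)
  have "arctan x < 2" using arctan_ubound[of x] pi_less_4 by linarith
  thus ?thesis using Inl by (simp add: hh_def gg_def tan_arctan)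
next
  case (Inr y)
  have "\<not> arctan y + 4 < 2" using arctan_lbound[of y] pi_less_4 by linarith
  thus ?thesis using Inr by (simp add: hh_def gg_def tan_arctan)
qed

lemma hh_inj: "hh a = hh b \<longleftrightarrow> a = b"
  by (metis gg_hh)

definition mk :: "(real + real) set \<Rightarrow> ((real + real) \<Rightarrow> (real + real) \<Rightarrow> real) \<Rightarrow> mspc" where
  "mk S d = metric (hh ` S, \<lambda>u v. d (gg u) (gg v))"

lemma mk_metric:
  assumes "Metric_space S d"
  shows "mspace (mk S d) = hh ` S" "\<And>a b. mdist (mk S d) (hh a) (hh b) = d a b"
proof -
  interpret Metric_space S d by fact
  have "Metric_space (hh ` S) (\<lambda>u v. d (gg u) (gg v))"
  proof
    show "\<And>x y. 0 \<le> d (gg x) (gg y)" by simp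
    show "\<And>x y. d (gg x) (gg y) = d (gg y) (gg x)" by (simp add: commute)
    show "\<And>x y. x \<in> hh ` S \<Longrightarrow> y \<in> hh ` S \<Longrightarrow> (d (gg x) (gg y) = 0) = (x = y)"
      by (auto simp: hh_inj)
    show "\<And>x y z. x \<in> hh ` S \<Longrightarrow> y \<in> hh ` S \<Longrightarrow> z \<in> hh ` S \<Longrightarrow>
        d (gg x) (gg z) \<le> d (gg x) (gg y) + d (gg y) (gg z)"
      by (auto intro: triangle)
  qed
  then interpret T: Metric_space "hh ` S" "\<lambda>u v. d (gg u) (gg v)" .
  show "mspace (mk S d) = hh ` S" by (simp add: mk_def)
  show "\<And>a b. mdist (mk S d) (hh a) (hh b) = d a b" by (simp add: mk_def)
qed

definition Cr :: "mspc \<Rightarrow> mspc \<Rightarrow> (real \<times> real) set \<Rightarrow> real \<Rightarrow> real \<Rightarrow> real \<Rightarrow> real" where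
  "Cr X Y R c x y = Inf ((\<lambda>(x',y'). mdist X x x' + c + mdist Y y' y) ` R)"

definition gl :: "mspc \<Rightarrow> mspc \<Rightarrow> (real \<times> real) set \<Rightarrow> real \<Rightarrow> (real + real) \<Rightarrow> (real + real) \<Rightarrow> real" where
  "gl X Y R c u v = (case u of Inl x \<Rightarrow> (case v of Inl x' \<Rightarrow> mdist X x x' | Inr y \<Rightarrow> Cr X Y R c x y)
       | Inr y \<Rightarrow> (case v of Inl x \<Rightarrow> Cr X Y R c x y | Inr y' \<Rightarrow> mdist Y y y'))"

lemma gl_simps [simp]:
  "gl X Y R c (Inl x) (Inl x') = mdist X x x'"
  "gl X Y R c (Inl x) (Inr y) = Cr X Y R c x y"
  "gl X Y R c (Inr y) (Inl x) = Cr X Y R c x y"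
  "gl X Y R c (Inr y) (Inr y') = mdist Y y y'"
  by (simp_all add: gl_def)

lemma Cr_le:
  assumes "0 \<le> c" "(x',y') \<in> R"
  shows "Cr X Y R c x y \<le> mdist X x x' + c + mdist Y y' y"
  unfolding Cr_def
proof (rule cInf_lower2[OF imageI[OF assms(2)]])
  show "bdd_below ((\<lambda>(x', y'). mdist X x x' + c + mdist Y y' y) ` R)"
    by (rule bdd_belowI[where m=0]) (use assms(1) in auto)
qed simp

lemma Cr_ge:
  assumes "R \<noteq> {}" "\<And>x' y'. (x',y') \<in> R \<Longrightarrow> K \<le> mdist X x x' + c + mdist Y y' y"
  shows "K \<le> Cr X Y R c x y"
  unfolding Cr_def by (rule cInf_greatest) (use assms in auto)

locale glue =
  fixes X Y :: mspc and R :: "(real \<times> real) set" and c :: real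
  assumes Rne: "R \<noteq> {}" and Rsub: "R \<subseteq> mspace X \<times> mspace Y" and cpos: "0 < c"
    and dis: "\<And>x y x' y'. (x,y) \<in> R \<Longrightarrow> (x',y') \<in> R \<Longrightarrow> \<bar>mdist X x x' - mdist Y y y'\<bar> \<le> 2*c"
begin

abbreviation "C \<equiv> Cr X Y R c"

lemma C_ge_c: "c \<le> C x y"
  by (rule Cr_ge[OF Rne]) (simp add: add_nonneg_nonneg)

lemma T1:
  assumes "x1 \<in> mspace X" "x2 \<in> mspace X"
  shows "C x1 y \<le> mdist X x1 x2 + C x2 y"
proof -
  have "C x1 y - mdist X x1 x2 \<le> C x2 y"
  proof (rule Cr_ge[OF Rne])
    fix x' y' assume xy: "(x',y') \<in> R"
    hence "x' \<in> mspace X" using Rsub by auto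
    have "C x1 y \<le> mdist X x1 x' + c + mdist Y y' y" using Cr_le[OF _ xy] cpos by simp
    moreover have "mdist X x1 x' \<le> mdist X x1 x2 + mdist X x2 x'"
      using mdist_triangle[where m=X and x=x1 and y=x2 and z=x'] assms \<open>x' \<in> mspace X\<close> by simp
    ultimately show "C x1 y - mdist X x1 x2 \<le> mdist X x2 x' + c + mdist Y y' y" by linarith
  qed
  thus ?thesis by linarith
qed

lemma T3:
  assumes "y1 \<in> mspace Y" "y2 \<in> mspace Y"
  shows "C x y2 \<le> C x y1 + mdist Y y1 y2"
proof -
  have "C x y2 - mdist Y y1 y2 \<le> C x y1"
  proof (rule Cr_ge[OF Rne])
    fix x' y' assume xy: "(x',y') \<in> R"
    hence "y' \<in> mspace Y" using Rsub by auto
    have "C x y2 \<le> mdist X x x' + c + mdist Y y' y2" using Cr_le[OF _ xy] cpos by simp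
    moreover have "mdist Y y' y2 \<le> mdist Y y' y1 + mdist Y y1 y2"
      using mdist_triangle[where m=Y and x=y' and y=y1 and z=y2] assms \<open>y' \<in> mspace Y\<close> by simp
    ultimately show "C x y2 - mdist Y y1 y2 \<le> mdist X x x' + c + mdist Y y' y1" by linarith
  qed
  thus ?thesis by linarith
qed

lemma T2:
  assumes "x1 \<in> mspace X" "x2 \<in> mspace X" "y \<in> mspace Y"
  shows "mdist X x1 x2 \<le> C x1 y + C x2 y"
proof -
  have "mdist X x1 x2 - C x2 y \<le> C x1 y"
  proof (rule Cr_ge[OF Rne])
    fix x' y' assume xy: "(x',y') \<in> R"
    hence x': "x' \<in> mspace X" "y' \<in> mspace Y" using Rsub by auto
    have "mdist X x1 x2 - (mdist X x1 x' + c + mdist Y y' y) \<le> C x2 y"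
    proof (rule Cr_ge[OF Rne])
      fix x'' y'' assume xy2: "(x'',y'') \<in> R"
      hence x'': "x'' \<in> mspace X" "y'' \<in> mspace Y" using Rsub by auto
      have a: "mdist X x1 x2 \<le> mdist X x1 x' + mdist X x' x''  + mdist X x'' x2"
        using mdist_triangle[where m=X and x=x1 and y=x' and z=x2] mdist_triangle[where m=X and x=x' and y=x'' and z=x2] assms x' x'' by linarith
      have b: "mdist X x' x'' \<le> mdist Y y' y'' + 2*c" using dis[OF xy xy2] by linarith
      have cc: "mdist Y y' y'' \<le> mdist Y y' y + mdist Y y y''" using mdist_triangle[where m=Y and x=y' and y=y and z=y''] assms x' x'' by simp
      show "mdist X x1 x2 - (mdist X x1 x' + c + mdist Y y' y) \<le> mdist X x2 x'' + c + mdist Y y'' y"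
        using a b cc mdist_commute[of X x'' x2] mdist_commute[of Y y y''] by linarith
    qed
    thus "mdist X x1 x2 - C x2 y \<le> mdist X x1 x' + c + mdist Y y' y" by linarith
  qed
  thus ?thesis by linarith
qed

lemma T5:
  assumes "y1 \<in> mspace Y" "y2 \<in> mspace Y" "x \<in> mspace X"
  shows "mdist Y y1 y2 \<le> C x y1 + C x y2"
proof -
  have "mdist Y y1 y2 - C x y2 \<le> C x y1"
  proof (rule Cr_ge[OF Rne])
    fix x' y' assume xy: "(x',y') \<in> R"
    hence x': "x' \<in> mspace X" "y' \<in> mspace Y" using Rsub by auto
    have "mdist Y y1 y2 - (mdist X x x' + c + mdist Y y' y1) \<le> C x y2"
    proof (rule Cr_ge[OF Rne])
      fix x'' y'' assume xy2: "(x'',y'') \<in> R"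
      hence x'': "x'' \<in> mspace X" "y'' \<in> mspace Y" using Rsub by auto
      have a: "mdist Y y1 y2 \<le> mdist Y y1 y' + mdist Y y' y''  + mdist Y y'' y2"
        using mdist_triangle[where m=Y and x=y1 and y=y' and z=y2] mdist_triangle[where m=Y and x=y' and y=y'' and z=y2] assms x' x'' by linarith
      have b: "mdist Y y' y'' \<le> mdist X x' x'' + 2*c" using dis[OF xy xy2] by linarith
      have cc: "mdist X x' x'' \<le> mdist X x' x + mdist X x x''" using mdist_triangle[where m=X and x=x' and y=x and z=x''] assms x' x'' by simp
      show "mdist Y y1 y2 - (mdist X x x' + c + mdist Y y' y1) \<le> mdist X x x'' + c + mdist Y y'' y2"
        using a b cc mdist_commute[of X x' x] mdist_commute[of Y y1 y'] by linarith
    qed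
    thus "mdist Y y1 y2 - C x y2 \<le> mdist X x x' + c + mdist Y y' y1" by linarith
  qed
  thus ?thesis by linarith
qed

lemma gl_metric: "Metric_space (mspace X <+> mspace Y) (gl X Y R c)"
proof
  show "0 \<le> gl X Y R c u v" for u v
    using C_ge_c cpos by (cases u; cases v) (auto, (meson C_ge_c cpos less_imp_le order_trans)+)
  show "gl X Y R c u v = gl X Y R c v u" for u v
    by (cases u; cases v) (auto simp: mdist_commute)
  show "u \<in> mspace X <+> mspace Y \<Longrightarrow> v \<in> mspace X <+> mspace Y \<Longrightarrow> (gl X Y R c u v = 0) = (u = v)" for u v
    using C_ge_c cpos by (cases u; cases v) (auto, (metis C_ge_c cpos not_le order_refl)+)
  show "u \<in> mspace X <+> mspace Y \<Longrightarrow> v \<in> mspace X <+> mspace Y \<Longrightarrow> w \<in> mspace X <+> mspace Y \<Longrightarrow>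
      gl X Y R c u w \<le> gl X Y R c u v + gl X Y R c v w" for u v w
  proof (cases u; cases v; cases w)
    fix a b d assume "u = Inl a" "v = Inl b" "w = Inl d" and m: "u \<in> mspace X <+> mspace Y" "v \<in> mspace X <+> mspace Y" "w \<in> mspace X <+> mspace Y"
    thus ?thesis using mdist_triangle by auto
  next
    fix a b d assume "u = Inl a" "v = Inl b" "w = Inr d" and m: "u \<in> mspace X <+> mspace Y" "v \<in> mspace X <+> mspace Y" "w \<in> mspace X <+> mspace Y"
    thus ?thesis using T1[of a b d] m by auto
  next
    fix a b d assume "u = Inl a" "v = Inr b" "w = Inl d" and m: "u \<in> mspace X <+> mspace Y" "v \<in> mspace X <+> mspace Y" "w \<in> mspace X <+> mspace Y"
    thus ?thesis using T2[of a d b] m by auto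
  next
    fix a b d assume "u = Inl a" "v = Inr b" "w = Inr d" and m: "u \<in> mspace X <+> mspace Y" "v \<in> mspace X <+> mspace Y" "w \<in> mspace X <+> mspace Y"
    thus ?thesis using T3[of b d a] m by auto
  next
    fix a b d assume "u = Inr a" "v = Inl b" "w = Inl d" and m: "u \<in> mspace X <+> mspace Y" "v \<in> mspace X <+> mspace Y" "w \<in> mspace X <+> mspace Y"
    thus ?thesis using T1[of d b a] m mdist_commute[of X b d] by auto
  next
    fix a b d assume "u = Inr a" "v = Inl b" "w = Inr d" and m: "u \<in> mspace X <+> mspace Y" "v \<in> mspace X <+> mspace Y" "w \<in> mspace X <+> mspace Y"
    thus ?thesis using T5[of a d b] m by auto
  next
    fix a b d assume "u = Inr a" "v = Inr b" "w = Inl d" and m: "u \<in> mspace X <+> mspace Y" "v \<in> mspace X <+> mspace Y" "w \<in> mspace X <+> mspace Y"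
    thus ?thesis using T3[of b a d] m mdist_commute[of Y a b] by auto
  next
    fix a b d assume "u = Inr a" "v = Inr b" "w = Inr d" and m: "u \<in> mspace X <+> mspace Y" "v \<in> mspace X <+> mspace Y" "w \<in> mspace X <+> mspace Y"
    thus ?thesis using mdist_triangle by auto
  qed
qed

end

lemma mdist_self [simp]: "x \<in> mspace m \<Longrightarrow> mdist m x x = 0"
  by simp

definition GHset :: "mspc \<Rightarrow> mspc \<Rightarrow> real set" where
  "GHset X Y = {r. \<exists>(Z::real metric) f g. isom_embed X Z f \<and> isom_embed Y Z g \<and>
                        hdist Z (f ` mspace X) (g ` mspace Y) \<le> r}"

lemma dGH_GHset: "dGH X Y = Inf (GHset X Y)"
  by (simp add: dGH_def GHset_def)

lemma embed_cross_bound: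
  assumes "cms X" "cms Y" "isom_embed X Z f" "isom_embed Y Z g"
  shows "\<exists>K. \<forall>a\<in>f ` mspace X. \<forall>b\<in>g ` mspace Y. mdist Z a b \<le> K"
proof -
  obtain BX where BX: "\<forall>x\<in>mspace X. \<forall>y\<in>mspace X. mdist X x y \<le> BX" using cms_bounded[OF assms(1)] by blast
  obtain BY where BY: "\<forall>x\<in>mspace Y. \<forall>y\<in>mspace Y. mdist Y x y \<le> BY" using cms_bounded[OF assms(2)] by blast
  obtain x0 where x0: "x0 \<in> mspace X" using assms(1) unfolding cms_def by blast
  obtain y0 where y0: "y0 \<in> mspace Y" using assms(2) unfolding cms_def by blast
  have fi: "f ` mspace X \<subseteq> mspace Z" and fd: "\<forall>x\<in>mspace X. \<forall>y\<in>mspace X. mdist Z (f x) (f y) = mdist X x y"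
    using assms(3) unfolding isom_embed_def by auto
  have gi: "g ` mspace Y \<subseteq> mspace Z" and gd: "\<forall>x\<in>mspace Y. \<forall>y\<in>mspace Y. mdist Z (g x) (g y) = mdist Y x y"
    using assms(4) unfolding isom_embed_def by auto
  show ?thesis
  proof (intro exI ballI)
    fix a b assume a: "a \<in> f ` mspace X" and b: "b \<in> g ` mspace Y"
    then obtain x y where xy: "x \<in> mspace X" "a = f x" "y \<in> mspace Y" "b = g y" by auto
    have m: "f x \<in> mspace Z" "f x0 \<in> mspace Z" "g y0 \<in> mspace Z" "g y \<in> mspace Z"
      using fi gi xy x0 y0 by auto
    have "mdist Z (f x) (g y) \<le> mdist Z (f x) (f x0) + mdist Z (f x0) (g y)"
      using mdist_triangle[where m=Z and x="f x" and y="f x0" and z="g y"] m by simp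
    moreover have "mdist Z (f x0) (g y) \<le> mdist Z (f x0) (g y0) + mdist Z (g y0) (g y)"
      using mdist_triangle[where m=Z and x="f x0" and y="g y0" and z="g y"] m by simp
    moreover have "mdist Z (f x) (f x0) \<le> BX" using fd BX xy x0 by auto
    moreover have "mdist Z (g y0) (g y) \<le> BY" using gd BY xy y0 by auto
    ultimately show "mdist Z a b \<le> BX + mdist Z (f x0) (g y0) + BY" unfolding xy(2,4) by linarith
  qed
qed

lemma GHset_bdd:
  assumes "cms X" "cms Y"
  shows "bdd_below (GHset X Y)"
proof (rule bdd_belowI[where m=0])
  fix r assume "r \<in> GHset X Y"
  hence "\<exists>(Z::real metric) f g. isom_embed X Z f \<and> isom_embed Y Z g \<and> hdist Z (f ` mspace X) (g ` mspace Y) \<le> r"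
    by (simp add: GHset_def)
  then obtain Z :: "real metric" and f g where e: "isom_embed X Z f" "isom_embed Y Z g" "hdist Z (f ` mspace X) (g ` mspace Y) \<le> r"
    by blast
  obtain K where K: "\<forall>a\<in>f ` mspace X. \<forall>b\<in>g ` mspace Y. mdist Z a b \<le> K"
    using embed_cross_bound[OF assms e(1,2)] by blast
  have ne1: "f ` mspace X \<noteq> {}" using assms(1) unfolding cms_def by simp
  have ne2: "g ` mspace Y \<noteq> {}" using assms(2) unfolding cms_def by simp
  have "0 \<le> hdist Z (f ` mspace X) (g ` mspace Y)" by (rule hdist_ge0[OF ne1 ne2 K])
  thus "0 \<le> r" using e(3) by linarith
qed

lemma glue_in_GHset:
  assumes "mspace X \<noteq> {}" "R \<subseteq> mspace X \<times> mspace Y"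
    and "\<forall>x\<in>mspace X. \<exists>y. (x,y) \<in> R" "\<forall>y\<in>mspace Y. \<exists>x. (x,y) \<in> R" "0 < c"
    and "\<forall>x y x' y'. (x,y) \<in> R \<longrightarrow> (x',y') \<in> R \<longrightarrow> \<bar>mdist X x x' - mdist Y y y'\<bar> \<le> 2*c"
  shows "c \<in> GHset X Y"
proof -
  have Rne: "R \<noteq> {}" using assms(1,3) by blast
  interpret glue X Y R c
  proof
    show "R \<noteq> {}" by fact
    show "R \<subseteq> mspace X \<times> mspace Y" by fact
    show "0 < c" by fact
    show "\<And>x y x' y'. (x, y) \<in> R \<Longrightarrow> (x', y') \<in> R \<Longrightarrow> \<bar>mdist X x x' - mdist Y y y'\<bar> \<le> 2 * c"
      using assms(6) by blast
  qed
  define Z where "Z = mk (mspace X <+> mspace Y) (gl X Y R c)"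
  note mm = mk_metric[OF gl_metric]
  have mZ: "mspace Z = hh ` (mspace X <+> mspace Y)" using mm unfolding Z_def by simp
  have dZ: "\<And>a b. mdist Z (hh a) (hh b) = gl X Y R c a b" using mm unfolding Z_def by simp
  have e1: "isom_embed X Z (hh \<circ> Inl)" unfolding isom_embed_def mZ using dZ by auto
  have e2: "isom_embed Y Z (hh \<circ> Inr)" unfolding isom_embed_def mZ using dZ by auto
  have "hdist Z ((hh \<circ> Inl) ` mspace X) ((hh \<circ> Inr) ` mspace Y) \<le> c"
  proof (rule hdist_le)
    show "(hh \<circ> Inl) ` mspace X \<noteq> {}" using assms(1) by simp
    show "(hh \<circ> Inr) ` mspace Y \<noteq> {}" using assms(1,3,2) by blast
    show "\<forall>a\<in>(hh \<circ> Inl) ` mspace X. \<exists>b\<in>(hh \<circ> Inr) ` mspace Y. mdist Z a b \<le> c"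
    proof
      fix a assume "a \<in> (hh \<circ> Inl) ` mspace X"
      then obtain x where x: "x \<in> mspace X" "a = hh (Inl x)" by auto
      then obtain y where y: "(x,y) \<in> R" using assms(3) by blast
      hence "y \<in> mspace Y" using assms(2) by auto
      moreover have "mdist Z a (hh (Inr y)) \<le> c"
        using x dZ Cr_le[OF _ y, of c X Y x y] cpos x \<open>y \<in> mspace Y\<close> mdist_zero[where m=X and x=x and y=x] mdist_zero[where m=Y and x=y and y=y] by simp
      ultimately show "\<exists>b\<in>(hh \<circ> Inr) ` mspace Y. mdist Z a b \<le> c" by force
    qed
    show "\<forall>b\<in>(hh \<circ> Inr) ` mspace Y. \<exists>a\<in>(hh \<circ> Inl) ` mspace X. mdist Z a b \<le> c"
    proof
      fix b assume "b \<in> (hh \<circ> Inr) ` mspace Y"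
      then obtain y where y: "y \<in> mspace Y" "b = hh (Inr y)" by auto
      then obtain x where x: "(x,y) \<in> R" using assms(4) by blast
      hence "x \<in> mspace X" using assms(2) by auto
      moreover have "mdist Z (hh (Inl x)) b \<le> c"
        using y dZ Cr_le[OF _ x, of c X Y x y] cpos \<open>x \<in> mspace X\<close> y mdist_zero[where m=X and x=x and y=x] mdist_zero[where m=Y and x=y and y=y] by simp
      ultimately show "\<exists>a\<in>(hh \<circ> Inl) ` mspace X. mdist Z a b \<le> c" by force
    qed
  qed
  thus ?thesis unfolding GHset_def using e1 e2 by blast
qed

lemma dGH_le:
  assumes "cms X" "cms Y" "R \<subseteq> mspace X \<times> mspace Y"
    and "\<forall>x\<in>mspace X. \<exists>y. (x,y) \<in> R" "\<forall>y\<in>mspace Y. \<exists>x. (x,y) \<in> R" "0 < c"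
    and "\<forall>x y x' y'. (x,y) \<in> R \<longrightarrow> (x',y') \<in> R \<longrightarrow> \<bar>mdist X x x' - mdist Y y y'\<bar> \<le> 2*c"
  shows "dGH X Y \<le> c"
proof -
  have "mspace X \<noteq> {}" using assms(1) by (simp add: cms_def)
  hence "c \<in> GHset X Y" by (rule glue_in_GHset[OF _ assms(3-7)])
  thus ?thesis unfolding dGH_GHset using GHset_bdd[OF assms(1,2)] by (simp add: cInf_lower)
qed

lemma GHset_ne:
  assumes "cms X" "cms Y"
  shows "GHset X Y \<noteq> {}"
proof -
  obtain BX where BX: "\<forall>x\<in>mspace X. \<forall>y\<in>mspace X. mdist X x y \<le> BX" using cms_bounded[OF assms(1)] by blast
  obtain BY where BY: "\<forall>x\<in>mspace Y. \<forall>y\<in>mspace Y. mdist Y x y \<le> BY" using cms_bounded[OF assms(2)] by blast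
  define c where "c = max 1 (BX + BY)"
  have "c \<in> GHset X Y"
  proof (rule glue_in_GHset[where R="mspace X \<times> mspace Y"])
    show "\<forall>x y x' y'. (x,y) \<in> mspace X \<times> mspace Y \<longrightarrow> (x',y') \<in> mspace X \<times> mspace Y \<longrightarrow> \<bar>mdist X x x' - mdist Y y y'\<bar> \<le> 2*c"
    proof (intro allI impI)
      fix x y x' y' assume "(x,y) \<in> mspace X \<times> mspace Y" "(x',y') \<in> mspace X \<times> mspace Y"
      hence "x \<in> mspace X" "y \<in> mspace Y" "x' \<in> mspace X" "y' \<in> mspace Y" by auto
      hence "mdist X x x' \<le> BX" "mdist Y y y' \<le> BY" using BX BY by auto
      moreover have "0 \<le> mdist X x x'" "0 \<le> mdist Y y y'" by auto
      moreover have "BX + BY \<le> c" unfolding c_def by simp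
      ultimately show "\<bar>mdist X x x' - mdist Y y y'\<bar> \<le> 2*c" by linarith
    qed
  next
    show "mspace X \<noteq> {}" using assms(1) by (simp add: cms_def)
  qed (use assms(1,2) in \<open>auto simp: c_def cms_def\<close>)
  thus ?thesis by auto
qed

lemma dGH_lt:
  assumes "cms X" "cms Y" "dGH X Y < \<rho>"
  shows "\<exists>R. R \<subseteq> mspace X \<times> mspace Y \<and> (\<forall>x\<in>mspace X. \<exists>y. (x,y) \<in> R) \<and> (\<forall>y\<in>mspace Y. \<exists>x. (x,y) \<in> R)
     \<and> (\<forall>x y x' y'. (x,y) \<in> R \<longrightarrow> (x',y') \<in> R \<longrightarrow> \<bar>mdist X x x' - mdist Y y y'\<bar> \<le> 2*\<rho>)"
proof -
  obtain r where "r \<in> GHset X Y" "r < \<rho>"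
    using cInf_lessD[OF GHset_ne[OF assms(1,2)]] assms(3) unfolding dGH_GHset by blast
  hence "\<exists>(Z::real metric) f g. isom_embed X Z f \<and> isom_embed Y Z g \<and> hdist Z (f ` mspace X) (g ` mspace Y) \<le> r"
    by (simp add: GHset_def)
  then obtain Z :: "real metric" and f g where e: "isom_embed X Z f" "isom_embed Y Z g" "hdist Z (f ` mspace X) (g ` mspace Y) < \<rho>"
    using \<open>r < \<rho>\<close> by force
  obtain K where K: "\<forall>a\<in>f ` mspace X. \<forall>b\<in>g ` mspace Y. mdist Z a b \<le> K"
    using embed_cross_bound[OF assms(1,2) e(1,2)] by blast
  have ne: "f ` mspace X \<noteq> {}" "g ` mspace Y \<noteq> {}" using assms(1,2) unfolding cms_def by simp_all
  have H: "(\<forall>a\<in>f ` mspace X. \<exists>b\<in>g ` mspace Y. mdist Z a b < \<rho>) \<and> (\<forall>b\<in>g ` mspace Y. \<exists>a\<in>f ` mspace X. mdist Z a b < \<rho>)"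
    using hdist_lt[OF ne K e(3)] .
  have fi: "f ` mspace X \<subseteq> mspace Z" and fd: "\<forall>x\<in>mspace X. \<forall>y\<in>mspace X. mdist Z (f x) (f y) = mdist X x y"
    using e(1) unfolding isom_embed_def by auto
  have gi: "g ` mspace Y \<subseteq> mspace Z" and gd: "\<forall>x\<in>mspace Y. \<forall>y\<in>mspace Y. mdist Z (g x) (g y) = mdist Y x y"
    using e(2) unfolding isom_embed_def by auto
  define R where "R = {(x,y). x \<in> mspace X \<and> y \<in> mspace Y \<and> mdist Z (f x) (g y) < \<rho>}"
  show ?thesis
  proof (intro exI conjI)
    show "R \<subseteq> mspace X \<times> mspace Y" unfolding R_def by auto
    show "\<forall>x\<in>mspace X. \<exists>y. (x,y) \<in> R"
    proof
      fix x assume x: "x \<in> mspace X"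
      then obtain b where "b \<in> g ` mspace Y" "mdist Z (f x) b < \<rho>" using H by blast
      then obtain y where "y \<in> mspace Y" "mdist Z (f x) (g y) < \<rho>" by blast
      thus "\<exists>y. (x,y) \<in> R" using x unfolding R_def by blast
    qed
    show "\<forall>y\<in>mspace Y. \<exists>x. (x,y) \<in> R"
    proof
      fix y assume y: "y \<in> mspace Y"
      then obtain a where "a \<in> f ` mspace X" "mdist Z a (g y) < \<rho>" using H by blast
      then obtain x where "x \<in> mspace X" "mdist Z (f x) (g y) < \<rho>" by blast
      thus "\<exists>x. (x,y) \<in> R" using y unfolding R_def by blast
    qed
    show "\<forall>x y x' y'. (x,y) \<in> R \<longrightarrow> (x',y') \<in> R \<longrightarrow> \<bar>mdist X x x' - mdist Y y y'\<bar> \<le> 2*\<rho>"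
    proof (intro allI impI)
      fix x y x' y' assume a: "(x,y) \<in> R" "(x',y') \<in> R"
      hence m: "x \<in> mspace X" "y \<in> mspace Y" "x' \<in> mspace X" "y' \<in> mspace Y"
        "mdist Z (f x) (g y) < \<rho>" "mdist Z (f x') (g y') < \<rho>" unfolding R_def by auto
      have mz: "f x \<in> mspace Z" "f x' \<in> mspace Z" "g y \<in> mspace Z" "g y' \<in> mspace Z" using m fi gi by auto
      have 1: "mdist Z (f x) (f x') \<le> mdist Z (f x) (g y) + mdist Z (g y) (f x')"
        using mdist_triangle[where m=Z and x="f x" and y="g y" and z="f x'"] mz by simp
      have 2: "mdist Z (g y) (f x') \<le> mdist Z (g y) (g y') + mdist Z (g y') (f x')"
        using mdist_triangle[where m=Z and x="g y" and y="g y'" and z="f x'"] mz by simp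
      have 3: "mdist Z (g y) (g y') \<le> mdist Z (g y) (f x) + mdist Z (f x) (g y')"
        using mdist_triangle[where m=Z and x="g y" and y="f x" and z="g y'"] mz by simp
      have 4: "mdist Z (f x) (g y') \<le> mdist Z (f x) (f x') + mdist Z (f x') (g y')"
        using mdist_triangle[where m=Z and x="f x" and y="f x'" and z="g y'"] mz by simp
      have "mdist Z (f x) (f x') = mdist X x x'" "mdist Z (g y) (g y') = mdist Y y y'" using fd gd m by auto
      thus "\<bar>mdist X x x' - mdist Y y y'\<bar> \<le> 2*\<rho>"
        using 1 2 3 4 m(5,6) mdist_commute[of Z "g y'" "f x'"] mdist_commute[of Z "g y" "f x"] by linarith
    qed
  qed
qed

lemma abs_tri: "\<bar>a - b\<bar> \<le> (D::real) \<Longrightarrow> \<bar>b - c\<bar> \<le> E \<Longrightarrow> \<bar>a - c\<bar> \<le> D + E"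
  by arith

definition good :: "mspc \<Rightarrow> mspc \<Rightarrow> (real \<Rightarrow> real) \<Rightarrow> real \<Rightarrow> bool" where
  "good M X \<phi> D \<longleftrightarrow> \<phi> ` mspace X \<subseteq> mspace M \<and> mspace M \<subseteq> \<phi> ` mspace X \<and>
     (\<forall>x\<in>mspace X. \<forall>x'\<in>mspace X. \<bar>mdist X x x' - mdist M (\<phi> x) (\<phi> x')\<bar> \<le> D)"

lemma good_mono: "good M X \<phi> D \<Longrightarrow> D \<le> D' \<Longrightarrow> good M X \<phi> D'"
  unfolding good_def by force

locale GHS =
  fixes M :: mspc and r :: real
  assumes finM: "finite (mspace M)" and gen: "generic M" and rpos: "0 < r"
    and rlt: "r < min (s_inv M / 4) (min (e_inv M / 4) (t_inv M / 6))"
begin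

abbreviation "\<delta> \<equiv> mdist M"

lemma r4s: "4*r < s_inv M" and r4e: "4*r < e_inv M"
  using rlt by auto

lemma cardM: "card (mspace M) \<ge> 3" using gen unfolding generic_def by simp

lemma Mne: "mspace M \<noteq> {}" using cardM by auto

lemma cmsM: "cms M"
proof -
  have "compactin (mtopology_of M) (mspace M)"
    by (rule finite_imp_compactin) (use finM in auto)
  thus ?thesis unfolding cms_def compact_space_def using Mne by simp
qed

lemma sep: "m \<in> mspace M \<Longrightarrow> m' \<in> mspace M \<Longrightarrow> m \<noteq> m' \<Longrightarrow> s_inv M \<le> \<delta> m m'"
  unfolding s_inv_def by (rule cInf_lower) (auto intro!: bdd_belowI[where m=0])

lemma dis_le:
  assumes "\<And>m m'. m \<in> mspace M \<Longrightarrow> m' \<in> mspace M \<Longrightarrow> \<bar>\<delta> m m' - \<delta> (\<sigma> m) (\<sigma> m')\<bar> \<le> K"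
  shows "dis M \<sigma> \<le> K"
  unfolding dis_def by (rule cSUP_least) (use Mne assms in auto)

lemma e_le:
  assumes "bij_betw \<sigma> (mspace M) (mspace M)" "m \<in> mspace M" "\<sigma> m \<noteq> m"
  shows "e_inv M \<le> dis M \<sigma>"
  unfolding e_inv_def
proof (rule cInf_lower)
  show "dis M \<sigma> \<in> {dis M f |f. bij_betw f (mspace M) (mspace M) \<and> (\<exists>x\<in>mspace M. f x \<noteq> x)}"
    using assms by blast
  show "bdd_below {dis M f |f. bij_betw f (mspace M) (mspace M) \<and> (\<exists>x\<in>mspace M. f x \<noteq> x)}"
  proof (rule bdd_belowI[where m=0], clarify)
    fix f assume "bij_betw f (mspace M) (mspace M)"
    obtain m0 where "m0 \<in> mspace M" using Mne by blast
    have "bdd_above ((\<lambda>p. \<bar>\<delta> (fst p) (snd p) - \<delta> (f (fst p)) (f (snd p))\<bar>) ` (mspace M \<times> mspace M))"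
      by (rule bdd_above_finite) (use finM in simp)
    hence "\<bar>\<delta> (fst (m0,m0)) (snd (m0,m0)) - \<delta> (f (fst (m0,m0))) (f (snd (m0,m0)))\<bar> \<le> dis M f"
      unfolding dis_def by (rule cSUP_upper[rotated]) (use \<open>m0 \<in> mspace M\<close> in simp)
    thus "0 \<le> dis M f" by linarith
  qed
qed

lemma uniq:
  assumes g1: "good M X \<phi> D" and g2: "good M X \<psi> D" and D: "2*D < s_inv M" "2*D < e_inv M"
    and x0: "x0 \<in> mspace X"
  shows "\<phi> x0 = \<psi> x0"
proof -
  have im1: "\<phi> ` mspace X \<subseteq> mspace M" and su1: "mspace M \<subseteq> \<phi> ` mspace X"
    and d1: "\<And>x x'. x \<in> mspace X \<Longrightarrow> x' \<in> mspace X \<Longrightarrow> \<bar>mdist X x x' - \<delta> (\<phi> x) (\<phi> x')\<bar> \<le> D"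
    using g1 unfolding good_def by auto
  have im2: "\<psi> ` mspace X \<subseteq> mspace M"
    and d2: "\<And>x x'. x \<in> mspace X \<Longrightarrow> x' \<in> mspace X \<Longrightarrow> \<bar>mdist X x x' - \<delta> (\<psi> x) (\<psi> x')\<bar> \<le> D"
    using g2 unfolding good_def by auto
  define sel where "sel m = (if m = \<phi> x0 then x0 else (SOME x. x \<in> mspace X \<and> \<phi> x = m))" for m
  have sel: "sel m \<in> mspace X \<and> \<phi> (sel m) = m" if "m \<in> mspace M" for m
  proof (cases "m = \<phi> x0")
    case True thus ?thesis using x0 by (simp add: sel_def)
  next
    case False
    have "\<exists>x. x \<in> mspace X \<and> \<phi> x = m" using su1 that by auto
    hence "(SOME x. x \<in> mspace X \<and> \<phi> x = m) \<in> mspace X \<and> \<phi> (SOME x. x \<in> mspace X \<and> \<phi> x = m) = m"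
      by (rule someI_ex)
    thus ?thesis using False by (simp add: sel_def)
  qed
  define \<sigma> where "\<sigma> m = \<psi> (sel m)" for m
  have \<sigma>M: "\<sigma> ` mspace M \<subseteq> mspace M" using sel im2 unfolding \<sigma>_def by auto
  have inj: "inj_on \<sigma> (mspace M)"
  proof (rule inj_onI, rule ccontr)
    fix m m' assume m: "m \<in> mspace M" "m' \<in> mspace M" "\<sigma> m = \<sigma> m'" "m \<noteq> m'"
    let ?x = "sel m" and ?x' = "sel m'"
    have x: "?x \<in> mspace X" "?x' \<in> mspace X" "\<phi> ?x = m" "\<phi> ?x' = m'" using sel m by auto
    have "\<bar>mdist X ?x ?x' - \<delta> m m'\<bar> \<le> D" using d1[OF x(1,2)] x by simp
    moreover have "s_inv M \<le> \<delta> m m'" using sep m by auto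
    moreover have "\<psi> ?x \<in> mspace M" using im2 x by auto
    hence "\<delta> (\<psi> ?x) (\<psi> ?x') = 0" using m(3) unfolding \<sigma>_def by simp
    hence "\<bar>mdist X ?x ?x'\<bar> \<le> D" using d2[OF x(1,2)] by simp
    ultimately show False using D by linarith
  qed
  have bij: "bij_betw \<sigma> (mspace M) (mspace M)"
    unfolding bij_betw_def using inj endo_inj_surj[OF finM \<sigma>M inj] by simp
  have dis\<sigma>: "dis M \<sigma> \<le> 2*D"
  proof (rule dis_le)
    fix m m' assume m: "m \<in> mspace M" "m' \<in> mspace M"
    let ?x = "sel m" and ?x' = "sel m'"
    have x: "?x \<in> mspace X" "?x' \<in> mspace X" "\<phi> ?x = m" "\<phi> ?x' = m'" using sel m by auto
    have "\<bar>\<delta> m m' - mdist X ?x ?x'\<bar> \<le> D" using d1[OF x(1,2)] x by (simp add: abs_minus_commute)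
    moreover have "\<bar>mdist X ?x ?x' - \<delta> (\<sigma> m) (\<sigma> m')\<bar> \<le> D" using d2[OF x(1,2)] unfolding \<sigma>_def .
    ultimately show "\<bar>\<delta> m m' - \<delta> (\<sigma> m) (\<sigma> m')\<bar> \<le> 2*D" using abs_tri by fastforce
  qed
  have "\<sigma> m = m" if "m \<in> mspace M" for m
  proof (rule ccontr)
    assume "\<sigma> m \<noteq> m"
    hence "e_inv M \<le> dis M \<sigma>" using e_le[OF bij that] by simp
    thus False using dis\<sigma> D by linarith
  qed
  moreover have "\<phi> x0 \<in> mspace M" using im1 x0 by auto
  ultimately have "\<sigma> (\<phi> x0) = \<phi> x0" by blast
  thus ?thesis unfolding \<sigma>_def sel_def by simp
qed

lemma sph_le:
  assumes "cms X" "good M X ch (2*c)" "0 < c"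
  shows "dGH M X \<le> c"
proof (rule dGH_le[where R="{(ch x, x) | x. x \<in> mspace X}"])
  show "cms M" by (rule cmsM)
  show "cms X" by fact
  show "0 < c" by fact
  show "{(ch x, x) |x. x \<in> mspace X} \<subseteq> mspace M \<times> mspace X" using assms(2) unfolding good_def by auto
  show "\<forall>x\<in>mspace M. \<exists>y. (x, y) \<in> {(ch x, x) |x. x \<in> mspace X}" using assms(2) unfolding good_def by auto
  show "\<forall>y\<in>mspace X. \<exists>x. (x, y) \<in> {(ch x, x) |x. x \<in> mspace X}" by auto
  show "\<forall>x y x' y'. (x, y) \<in> {(ch x, x) |x. x \<in> mspace X} \<longrightarrow> (x', y') \<in> {(ch x, x) |x. x \<in> mspace X} \<longrightarrow>
         \<bar>\<delta> x x' - mdist X y y'\<bar> \<le> 2 * c"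
    using assms(2) unfolding good_def by (auto simp: abs_minus_commute)
qed

lemma rel_to_fun:
  assumes R: "R \<subseteq> mspace M \<times> mspace X" "\<forall>x\<in>mspace M. \<exists>y. (x,y) \<in> R" "\<forall>y\<in>mspace X. \<exists>x. (x,y) \<in> R"
    "\<forall>x y x' y'. (x,y) \<in> R \<longrightarrow> (x',y') \<in> R \<longrightarrow> \<bar>\<delta> x x' - mdist X y y'\<bar> \<le> 2*\<rho>"
    and \<rho>: "2*\<rho> < s_inv M"
  shows "\<exists>\<psi>. good M X \<psi> (2*\<rho>) \<and> (\<forall>x\<in>mspace X. (\<psi> x, x) \<in> R)"
proof -
  define \<psi> where "\<psi> x = (SOME m. (m,x) \<in> R)" for x
  have inR: "(\<psi> x, x) \<in> R" if "x \<in> mspace X" for x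
    unfolding \<psi>_def using R(3) that by (metis someI_ex)
  have fn: "m = m'" if "(m,x) \<in> R" "(m',x) \<in> R" for m m' x
  proof (rule ccontr)
    assume "m \<noteq> m'"
    have mm: "m \<in> mspace M" "m' \<in> mspace M" "x \<in> mspace X" using that R(1) by auto
    have "\<bar>\<delta> m m' - mdist X x x\<bar> \<le> 2*\<rho>" using R(4) that by blast
    hence "\<delta> m m' \<le> 2*\<rho>" using mm by simp
    thus False using sep[OF mm(1,2) \<open>m \<noteq> m'\<close>] \<rho> by linarith
  qed
  have "good M X \<psi> (2*\<rho>)"
    unfolding good_def
  proof (intro conjI ballI subsetI)
    fix m assume "m \<in> \<psi> ` mspace X"
    thus "m \<in> mspace M" using inR R(1) by blast
  next
    fix m assume m: "m \<in> mspace M"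
    then obtain x where x: "(m,x) \<in> R" using R(2) by blast
    hence "x \<in> mspace X" using R(1) by auto
    hence "\<psi> x = m" using fn[OF inR x] by simp
    thus "m \<in> \<psi> ` mspace X" using \<open>x \<in> mspace X\<close> by blast
  next
    fix x x' assume "x \<in> mspace X" "x' \<in> mspace X"
    hence "\<bar>\<delta> (\<psi> x) (\<psi> x') - mdist X x x'\<bar> \<le> 2*\<rho>" using inR R(4) by blast
    thus "\<bar>mdist X x x' - \<delta> (\<psi> x) (\<psi> x')\<bar> \<le> 2*\<rho>" by (simp add: abs_minus_commute)
  qed
  thus ?thesis using inR by blast
qed

lemma sph_ge:
  assumes X: "cms X" and g: "good M X ch (2*r)"
    and wit: "\<And>\<rho>. \<rho> < r \<Longrightarrow> \<exists>x\<in>mspace X. \<exists>x'\<in>mspace X. 2*\<rho> < \<bar>mdist X x x' - \<delta> (ch x) (ch x')\<bar>"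
  shows "r \<le> dGH M X"
proof (rule ccontr)
  assume "\<not> r \<le> dGH M X"
  define \<rho> where "\<rho> = (dGH M X + r) / 2"
  have \<rho>: "dGH M X < \<rho>" "\<rho> < r" using \<open>\<not> r \<le> dGH M X\<close> unfolding \<rho>_def by auto
  obtain R where R: "R \<subseteq> mspace M \<times> mspace X" "\<forall>x\<in>mspace M. \<exists>y. (x,y) \<in> R" "\<forall>y\<in>mspace X. \<exists>x. (x,y) \<in> R"
    "\<forall>x y x' y'. (x,y) \<in> R \<longrightarrow> (x',y') \<in> R \<longrightarrow> \<bar>\<delta> x x' - mdist X y y'\<bar> \<le> 2*\<rho>"
    using dGH_lt[OF cmsM X \<rho>(1)] by blast
  have "2*\<rho> < s_inv M" using \<rho> r4s rpos by linarith
  then obtain \<psi> where \<psi>: "good M X \<psi> (2*\<rho>)" "\<forall>x\<in>mspace X. (\<psi> x, x) \<in> R"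
    using rel_to_fun[OF R] by blast
  have eq: "ch x = \<psi> x" if "x \<in> mspace X" for x
    by (rule uniq[OF g good_mono[OF \<psi>(1)] _ _ that]) (use \<rho> r4s r4e in auto)
  obtain x x' where xx: "x \<in> mspace X" "x' \<in> mspace X" "2*\<rho> < \<bar>mdist X x x' - \<delta> (ch x) (ch x')\<bar>"
    using wit[OF \<rho>(2)] by blast
  have "\<bar>\<delta> (\<psi> x) (\<psi> x') - mdist X x x'\<bar> \<le> 2*\<rho>" using R(4) \<psi>(2) xx by blast
  thus False using xx eq by (simp add: abs_minus_commute)
qed

lemma witness_of:
  assumes X: "cms X" and d: "dGH M X = r" and g: "good M X ch (2*r)" and "\<rho> < r"
  shows "\<exists>x\<in>mspace X. \<exists>x'\<in>mspace X. 2*\<rho> < \<bar>mdist X x x' - \<delta> (ch x) (ch x')\<bar>"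
proof (rule ccontr)
  assume na: "\<not> ?thesis"
  define \<rho>' where "\<rho>' = max \<rho> (r/2)"
  have \<rho>': "0 < \<rho>'" "\<rho>' < r" "\<rho> \<le> \<rho>'" using rpos \<open>\<rho> < r\<close> unfolding \<rho>'_def by auto
  have b: "\<bar>mdist X x x' - \<delta> (ch x) (ch x')\<bar> \<le> 2*\<rho>'" if "x \<in> mspace X" "x' \<in> mspace X" for x x'
  proof -
    have "\<not> 2*\<rho> < \<bar>mdist X x x' - \<delta> (ch x) (ch x')\<bar>" using na that by blast
    thus ?thesis using \<rho>'(3) by linarith
  qed
  have "good M X ch (2*\<rho>')"
    using g b unfolding good_def by blast
  hence "dGH M X \<le> \<rho>'" using sph_le[OF X _ \<rho>'(1)] by simp
  thus False using d \<rho>' by linarith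
qed

lemma extract_phi:
  assumes X: "cms X" and d: "dGH M X = r"
  shows "\<exists>\<phi>. good M X \<phi> (2*r)"
proof -
  define \<eta> where "\<eta> = min (s_inv M / 4 - r) (e_inv M / 4 - r)"
  have "0 < s_inv M/4 - r" "0 < e_inv M/4 - r" using r4s r4e by linarith+
  hence \<eta>: "0 < \<eta>" unfolding \<eta>_def by simp
  have \<eta>b: "\<eta> \<le> s_inv M / 4 - r" "\<eta> \<le> e_inv M / 4 - r" unfolding \<eta>_def by simp_all
  have ex: "\<exists>\<psi>. good M X \<psi> (2*\<rho>)" if "r < \<rho>" "\<rho> < r + \<eta>" for \<rho>
  proof -
    have lt: "dGH M X < \<rho>" using d that by simp
    obtain R where R: "R \<subseteq> mspace M \<times> mspace X" "\<forall>x\<in>mspace M. \<exists>y. (x,y) \<in> R" "\<forall>y\<in>mspace X. \<exists>x. (x,y) \<in> R"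
      "\<forall>x y x' y'. (x,y) \<in> R \<longrightarrow> (x',y') \<in> R \<longrightarrow> \<bar>\<delta> x x' - mdist X y y'\<bar> \<le> 2*\<rho>"
      using dGH_lt[OF cmsM X lt] by blast
    have "2*\<rho> < s_inv M" using that \<eta>b rpos by linarith
    thus ?thesis using rel_to_fun[OF R] by blast
  qed
  define \<rho>0 where "\<rho>0 = r + \<eta>/2"
  have r0: "r < \<rho>0" "\<rho>0 < r + \<eta>" using \<eta> unfolding \<rho>0_def by simp_all
  obtain \<phi> where \<phi>: "good M X \<phi> (2*\<rho>0)" using ex[OF r0] by blast
  have r0e: "4*\<rho>0 = 4*r + 2*\<eta>" unfolding \<rho>0_def by simp
  have s0a: "4*\<rho>0 < s_inv M" using \<eta> \<eta>b r4s r4e r0e by linarith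
  have s0b: "4*\<rho>0 < e_inv M" using \<eta> \<eta>b r4s r4e r0e by linarith
  note s0 = s0a s0b
  have all: "\<bar>mdist X x x' - \<delta> (\<phi> x) (\<phi> x')\<bar> \<le> 2*\<rho>" if rr: "r < \<rho>" "\<rho> \<le> \<rho>0" "x \<in> mspace X" "x' \<in> mspace X" for \<rho> x x'
  proof -
    have "\<rho> < r + \<eta>" using rr(2) r0 by linarith
    then obtain \<psi> where \<psi>: "good M X \<psi> (2*\<rho>)" using ex rr(1) by blast
    have eqs: "\<phi> y = \<psi> y" if "y \<in> mspace X" for y
      by (rule uniq[OF \<phi> good_mono[OF \<psi>] _ _ that]) (use s0 \<open>\<rho> \<le> \<rho>0\<close> in auto)
    have "\<bar>mdist X x x' - \<delta> (\<psi> x) (\<psi> x')\<bar> \<le> 2*\<rho>" using \<psi> rr(3,4) unfolding good_def by blast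
    thus ?thesis using eqs[OF rr(3)] eqs[OF rr(4)] by simp
  qed
  have "good M X \<phi> (2*r)"
    unfolding good_def
  proof (intro conjI ballI)
    show "\<phi> ` mspace X \<subseteq> mspace M" "mspace M \<subseteq> \<phi> ` mspace X" using \<phi> unfolding good_def by auto
    fix x x' assume xx: "x \<in> mspace X" "x' \<in> mspace X"
    show "\<bar>mdist X x x' - \<delta> (\<phi> x) (\<phi> x')\<bar> \<le> 2*r"
    proof (rule ccontr)
      let ?v = "\<bar>mdist X x x' - \<delta> (\<phi> x) (\<phi> x')\<bar>"
      assume "\<not> ?v \<le> 2*r"
      define \<rho> where "\<rho> = min \<rho>0 ((?v/2 + r)/2)"
      have "\<rho> \<le> \<rho>0" unfolding \<rho>_def by (rule min.cobounded1)
      moreover have "\<rho> \<le> (?v/2 + r)/2" unfolding \<rho>_def by (rule min.cobounded2)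
      moreover have "\<rho> = \<rho>0 \<or> \<rho> = (?v/2 + r)/2" unfolding \<rho>_def min_def by simp
      ultimately have "r < \<rho>" "\<rho> \<le> \<rho>0" "2*\<rho> < ?v" using \<open>\<not> ?v \<le> 2*r\<close> r0 by auto
      thus False using all[OF _ _ xx] by fastforce
    qed
  qed
  thus ?thesis by blast
qed

end

context GHS
begin

definition m1 where "m1 = (SOME m. m \<in> mspace M)"
definition zz where "zz = (SOME z::real. z \<notin> mspace M)"
definition AT where "AT = insert zz (mspace M)"
definition pT where "pT a = (if a = zz then m1 else a)"
definition rhoT where "rhoT a b = (if a = b then 0 else \<delta> (pT a) (pT b) + (if pT a = pT b then 2*r else 0))"

lemma m1M: "m1 \<in> mspace M"
  unfolding m1_def using Mne by (simp add: some_in_eq)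

lemma zzM: "zz \<notin> mspace M"
proof -
  have "\<exists>z::real. z \<notin> mspace M" by (rule ex_new_if_finite[OF infinite_UNIV_char_0 finM])
  thus ?thesis unfolding zz_def by (rule someI_ex)
qed

lemma pT_M: "a \<in> AT \<Longrightarrow> pT a \<in> mspace M"
  unfolding AT_def pT_def using m1M by auto

lemma pT_id: "a \<in> mspace M \<Longrightarrow> pT a = a"
  unfolding pT_def using zzM by auto

lemma fiber:
  assumes "a \<in> AT" "c \<in> AT" "a \<noteq> c" "pT a = pT c" "b \<in> AT" "b \<noteq> a" "b \<noteq> c"
  shows "pT b \<noteq> pT a"
proof -
  have "(a = zz \<and> c = m1) \<or> (a = m1 \<and> c = zz)"
    using assms(1-4) unfolding AT_def pT_def by (auto split: if_splits)
  thus ?thesis using assms(5-7) zzM unfolding AT_def pT_def by auto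
qed

lemma rhoT_ge: "a \<in> AT \<Longrightarrow> \<delta> (pT a) (pT b) \<le> rhoT a b"
  unfolding rhoT_def using rpos pT_M by auto

lemma rhoT_le: "a \<in> AT \<Longrightarrow> rhoT a b \<le> \<delta> (pT a) (pT b) + 2*r"
  unfolding rhoT_def using rpos pT_M by auto

lemma rhoT_ne: "pT a \<noteq> pT b \<Longrightarrow> rhoT a b = \<delta> (pT a) (pT b)"
  unfolding rhoT_def by auto

lemma rhoT_metric: "Metric_space AT rhoT"
proof
  show "0 \<le> rhoT x y" for x y unfolding rhoT_def using rpos by auto
  show "rhoT x y = rhoT y x" for x y unfolding rhoT_def using mdist_commute[of M "pT x" "pT y"] by auto
  show "(rhoT x y = 0) = (x = y)" if "x \<in> AT" "y \<in> AT" for x y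
  proof
    assume h: "rhoT x y = 0"
    show "x = y"
    proof (rule ccontr)
      assume "x \<noteq> y"
      show False
      proof (cases "pT x = pT y")
        case True
        thus False using h \<open>x \<noteq> y\<close> rpos mdist_nonneg[of M "pT y" "pT y"] unfolding rhoT_def by simp
      next
        case False
        hence "\<delta> (pT x) (pT y) \<noteq> 0" using pT_M[OF that(1)] pT_M[OF that(2)] by simp
        hence "0 < \<delta> (pT x) (pT y)" using mdist_nonneg[of M "pT x" "pT y"] by linarith
        thus False using h False \<open>x \<noteq> y\<close> unfolding rhoT_def by simp
      qed
    qed
  qed (simp add: rhoT_def)
  show "rhoT x z \<le> rhoT x y + rhoT y z" if xyz: "x \<in> AT" "y \<in> AT" "z \<in> AT" for x y z
  proof (cases "x = z")
    case True thus ?thesis unfolding rhoT_def using rpos by auto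
  next
    case xz: False
    show ?thesis
    proof (cases "pT x = pT z")
      case False
      hence "rhoT x z = \<delta> (pT x) (pT z)" by (rule rhoT_ne)
      also have "\<dots> \<le> \<delta> (pT x) (pT y) + \<delta> (pT y) (pT z)"
        using mdist_triangle[where m=M and x="pT x" and y="pT y" and z="pT z"] pT_M[OF xyz(1)] pT_M[OF xyz(2)] pT_M[OF xyz(3)] by simp
      also have "\<dots> \<le> rhoT x y + rhoT y z" using rhoT_ge[OF xyz(1), of y] rhoT_ge[OF xyz(2), of z] by (simp add: add_mono)
      finally show ?thesis .
    next
      case True
      have nn: "0 \<le> rhoT a b" for a b unfolding rhoT_def using rpos by auto
      show ?thesis
      proof (cases "y = x \<or> y = z")
        case True thus ?thesis using nn by (auto simp: rhoT_def)
      next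
        case False
        hence "pT y \<noteq> pT x" using fiber[OF xyz(1,3) xz \<open>pT x = pT z\<close> xyz(2)] by auto
        hence "s_inv M \<le> \<delta> (pT x) (pT y)" using sep[OF pT_M[OF xyz(1)] pT_M[OF xyz(2)]] by simp
        moreover have "rhoT x z \<le> 2*r" unfolding rhoT_def using True xz pT_M[OF xyz(1)] by simp
        moreover have "\<delta> (pT x) (pT y) \<le> rhoT x y" by (rule rhoT_ge[OF xyz(1)])
        ultimately show ?thesis using nn[of y z] r4s rpos by linarith
      qed
    qed
  qed
qed

definition TT :: mspc where "TT = metric (AT, rhoT)"

lemma TT_space: "mspace TT = AT" and TT_dist: "mdist TT = rhoT"
proof -
  interpret Metric_space AT rhoT by (rule rhoT_metric)
  show "mspace TT = AT" "mdist TT = rhoT" by (simp_all add: TT_def)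
qed

lemma AT_finite: "finite AT" unfolding AT_def using finM by simp

lemma cmsTT: "cms TT"
proof -
  have "compactin (mtopology_of TT) AT"
    by (rule finite_imp_compactin) (use AT_finite TT_space in auto)
  moreover have "AT \<noteq> {}" unfolding AT_def by simp
  ultimately show ?thesis unfolding cms_def compact_space_def topspace_mtopology_of TT_space by simp
qed

lemma goodTT: "good M TT pT (2*r)"
  unfolding good_def TT_space TT_dist
proof (intro conjI ballI subsetI)
  show "m \<in> mspace M" if "m \<in> pT ` AT" for m using that pT_M by auto
  show "m \<in> pT ` AT" if "m \<in> mspace M" for m
    using that pT_id unfolding AT_def by (metis image_eqI insertCI)
  fix x x' assume "x \<in> AT" "x' \<in> AT"
  thus "\<bar>rhoT x x' - \<delta> (pT x) (pT x')\<bar> \<le> 2*r"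
    using rhoT_ge[of x x'] rhoT_le[of x x'] by auto
qed

lemma zz_m1: "rhoT zz m1 = 2*r" "pT zz = m1" "pT m1 = m1"
  using zzM m1M pT_id unfolding rhoT_def pT_def by auto

lemma TT_sphere: "dGH M TT = r"
proof (rule antisym)
  show "dGH M TT \<le> r" by (rule sph_le[OF cmsTT goodTT rpos])
  show "r \<le> dGH M TT"
  proof (rule sph_ge[OF cmsTT goodTT])
    fix \<rho> assume "\<rho> < r"
    have "zz \<in> mspace TT" "m1 \<in> mspace TT" unfolding TT_space AT_def using m1M by auto
    moreover have "2*\<rho> < \<bar>mdist TT zz m1 - \<delta> (pT zz) (pT m1)\<bar>"
      unfolding TT_dist using zz_m1 m1M \<open>\<rho> < r\<close> rpos by simp
    ultimately show "\<exists>x\<in>mspace TT. \<exists>x'\<in>mspace TT. 2*\<rho> < \<bar>mdist TT x x' - \<delta> (pT x) (pT x')\<bar>" by blast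
  qed
qed

end

definition pm :: "'a set \<Rightarrow> ('a \<Rightarrow> 'a \<Rightarrow> real) \<Rightarrow> bool" where
  "pm S e \<longleftrightarrow> (\<forall>u v. 0 \<le> e u v) \<and> (\<forall>u v. e u v = e v u) \<and> (\<forall>u\<in>S. e u u = 0) \<and>
     (\<forall>u\<in>S. \<forall>v\<in>S. \<forall>w\<in>S. e u w \<le> e u v + e v w)"

lemma pm_metric: "Metric_space S d \<Longrightarrow> pm S d"
  unfolding pm_def by (auto simp: Metric_space.commute Metric_space.triangle Metric_space.nonneg Metric_space.mdist_zero)

lemma pm_pull: "Metric_space T d \<Longrightarrow> (\<And>u. u \<in> S \<Longrightarrow> f u \<in> T) \<Longrightarrow> pm S (\<lambda>u v. d (f u) (f v))"
  unfolding pm_def by (auto simp: Metric_space.commute Metric_space.triangle Metric_space.nonneg Metric_space.mdist_zero)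

lemma conv3:
  assumes d: "Metric_space S d" and e1: "pm S e1" and e2: "pm S e2" and a: "0 < a" "0 \<le> b" "0 \<le> c"
  shows "Metric_space S (\<lambda>u v. a * d u v + b * e1 u v + c * e2 u v)"
proof -
  interpret Metric_space S d by fact
  have e1': "\<And>u v. 0 \<le> e1 u v" "\<And>u v. e1 u v = e1 v u" "\<And>u. u\<in>S \<Longrightarrow> e1 u u = 0"
    "\<And>u v w. u\<in>S \<Longrightarrow> v\<in>S \<Longrightarrow> w\<in>S \<Longrightarrow> e1 u w \<le> e1 u v + e1 v w" using e1 unfolding pm_def by auto
  have e2': "\<And>u v. 0 \<le> e2 u v" "\<And>u v. e2 u v = e2 v u" "\<And>u. u\<in>S \<Longrightarrow> e2 u u = 0"
    "\<And>u v w. u\<in>S \<Longrightarrow> v\<in>S \<Longrightarrow> w\<in>S \<Longrightarrow> e2 u w \<le> e2 u v + e2 v w" using e2 unfolding pm_def by auto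
  show ?thesis
  proof
    show "0 \<le> a * d x y + b * e1 x y + c * e2 x y" for x y
      using a e1'(1)[of x y] e2'(1)[of x y] nonneg[of x y] by simp
    show "a * d x y + b * e1 x y + c * e2 x y = a * d y x + b * e1 y x + c * e2 y x" for x y
      using commute[of x y] e1'(2)[of x y] e2'(2)[of x y] by simp
    show "(a * d x y + b * e1 x y + c * e2 x y = 0) = (x = y)" if "x \<in> S" "y \<in> S" for x y
    proof
      assume h: "a * d x y + b * e1 x y + c * e2 x y = 0"
      have "0 \<le> b * e1 x y" "0 \<le> c * e2 x y" "0 \<le> a * d x y"
        using a e1'(1)[of x y] e2'(1)[of x y] nonneg[of x y] by simp_all
      hence "a * d x y = 0" using h by linarith
      hence "d x y = 0" using a by simp
      thus "x = y" using that by simp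
    next
      assume "x = y"
      thus "a * d x y + b * e1 x y + c * e2 x y = 0" using that e1'(3) e2'(3) by simp
    qed
    show "a * d x z + b * e1 x z + c * e2 x z \<le> (a * d x y + b * e1 x y + c * e2 x y) + (a * d y z + b * e1 y z + c * e2 y z)"
      if "x \<in> S" "y \<in> S" "z \<in> S" for x y z
    proof -
      have "a * d x z \<le> a * (d x y + d y z)" using triangle[OF that] a by (simp add: mult_left_mono)
      moreover have "b * e1 x z \<le> b * (e1 x y + e1 y z)" using e1'(4)[OF that] a by (simp add: mult_left_mono)
      moreover have "c * e2 x z \<le> c * (e2 x y + e2 y z)" using e2'(4)[OF that] a by (simp add: mult_left_mono)
      ultimately show ?thesis by (simp add: algebra_simps)
    qed
  qed
qed

lemma max0_lip: "\<bar>max 0 (a::real) - max 0 b\<bar> \<le> \<bar>a - b\<bar>"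
  by (simp add: max_def)

definition bb :: "real \<Rightarrow> real" where "bb t = max 0 (1 - 2*t)"
definition cc :: "real \<Rightarrow> real" where "cc t = max 0 (2*t - 1)"
definition aa :: "real \<Rightarrow> real" where "aa t = 1 - bb t - cc t"

lemma coef:
  assumes "0 \<le> t" "t \<le> 1"
  shows "0 \<le> aa t" "0 \<le> bb t" "0 \<le> cc t" "aa t + bb t + cc t = 1"
  using assms unfolding aa_def bb_def cc_def by (auto simp: max_def)

lemma coef_pos: "0 < t \<Longrightarrow> t < 1 \<Longrightarrow> 0 < aa t"
  unfolding aa_def bb_def cc_def by (auto simp: max_def)

lemma coef0: "aa 0 = 0" "bb 0 = 1" "cc 0 = 0" and coef1: "aa 1 = 0" "bb 1 = 0" "cc 1 = 1"
  unfolding aa_def bb_def cc_def by auto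

lemma coef_lo: "t \<le> 1/2 \<Longrightarrow> cc t = 0" and coef_hi: "1/2 \<le> t \<Longrightarrow> bb t = 0"
  unfolding bb_def cc_def by auto

lemma coef_lip: "\<bar>bb t - bb t'\<bar> \<le> 2*\<bar>t - t'\<bar>" "\<bar>cc t - cc t'\<bar> \<le> 2*\<bar>t - t'\<bar>"
proof -
  show "\<bar>bb t - bb t'\<bar> \<le> 2*\<bar>t - t'\<bar>" proof -
    have h: "\<bar>1 - 2*t - (1 - 2*t')\<bar> = 2*\<bar>t - t'\<bar>" by (auto simp: abs_if)
    show ?thesis unfolding bb_def using max0_lip[of "1 - 2*t" "1 - 2*t'"] h by linarith
  qed
  show "\<bar>cc t - cc t'\<bar> \<le> 2*\<bar>t - t'\<bar>" proof -
    have h: "\<bar>2*t - 1 - (2*t' - 1)\<bar> = 2*\<bar>t - t'\<bar>" by (auto simp: abs_if)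
    show ?thesis unfolding cc_def using max0_lip[of "2*t - 1" "2*t' - 1"] h by linarith
  qed
qed

locale GHP = GHS +
  fixes P :: mspc and \<phi> :: "real \<Rightarrow> real"
  assumes cmsP: "cms P" and dP: "dGH M P = r" and gP: "good M P \<phi> (2*r)"
begin

lemma phiM: "x \<in> mspace P \<Longrightarrow> \<phi> x \<in> mspace M"
  using gP unfolding good_def by auto

lemma gb: "x \<in> mspace P \<Longrightarrow> x' \<in> mspace P \<Longrightarrow> \<bar>mdist P x x' - \<delta> (\<phi> x) (\<phi> x')\<bar> \<le> 2*r"
  using gP unfolding good_def by auto

definition rep where "rep m = (SOME x. x \<in> mspace P \<and> \<phi> x = m)"

lemma rep: "m \<in> mspace M \<Longrightarrow> rep m \<in> mspace P \<and> \<phi> (rep m) = m"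
proof -
  assume "m \<in> mspace M"
  hence "\<exists>x. x \<in> mspace P \<and> \<phi> x = m" using gP unfolding good_def by auto
  thus ?thesis unfolding rep_def by (rule someI_ex)
qed

lemma phi_AT: "x \<in> mspace P \<Longrightarrow> \<phi> x \<in> AT" and pT_phi: "x \<in> mspace P \<Longrightarrow> pT (\<phi> x) = \<phi> x"
  using phiM pT_id unfolding AT_def by auto

lemma same_close:
  assumes "x \<in> mspace P" "x' \<in> mspace P" "mdist P x x' < s_inv M - 2*r"
  shows "\<phi> x = \<phi> x'"
proof (rule ccontr)
  assume "\<phi> x \<noteq> \<phi> x'"
  hence "s_inv M \<le> \<delta> (\<phi> x) (\<phi> x')" using sep phiM assms by blast
  thus False using gb[OF assms(1,2)] assms(3) by linarith
qed

definition R0 where "R0 = {(x,a). x \<in> mspace P \<and> a \<in> AT \<and> \<phi> x = pT a}"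

lemma R0_dis:
  assumes "(x,a) \<in> R0" "(x',a') \<in> R0"
  shows "\<bar>mdist P x x' - mdist TT a a'\<bar> \<le> 2*r"
proof -
  have h: "x \<in> mspace P" "a \<in> AT" "\<phi> x = pT a" "x' \<in> mspace P" "a' \<in> AT" "\<phi> x' = pT a'"
    using assms unfolding R0_def by auto
  have g: "\<bar>mdist P x x' - \<delta> (\<phi> x) (\<phi> x')\<bar> \<le> 2*r" by (rule gb[OF h(1,4)])
  show ?thesis
  proof (cases "a = a'")
    case True
    hence "\<delta> (\<phi> x) (\<phi> x') = 0" using h pT_M by simp
    moreover have "mdist TT a a' = 0" using True unfolding TT_dist rhoT_def by simp
    ultimately show ?thesis using g mdist_nonneg[of P x x'] by simp
  next
    case ne: False
    show ?thesis
    proof (cases "pT a = pT a'")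
      case False
      hence "mdist TT a a' = \<delta> (\<phi> x) (\<phi> x')" unfolding TT_dist using rhoT_ne h by simp
      thus ?thesis using g by simp
    next
      case True
      hence "mdist TT a a' = 2*r" unfolding TT_dist rhoT_def using ne pT_M[OF h(2)] by simp
      moreover have "\<delta> (\<phi> x) (\<phi> x') = 0" using True h pT_M by simp
      ultimately show ?thesis using g mdist_nonneg[of P x x'] rpos by simp
    qed
  qed
qed

sublocale W: glue P TT R0 r
proof
  obtain x0 where x0: "x0 \<in> mspace P" using cmsP unfolding cms_def by blast
  hence "(x0, \<phi> x0) \<in> R0" unfolding R0_def using phi_AT pT_phi by auto
  thus "R0 \<noteq> {}" by blast
  show "R0 \<subseteq> mspace P \<times> mspace TT" unfolding R0_def TT_space by auto
  show "0 < r" by (rule rpos)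
  show "\<And>x y x' y'. (x, y) \<in> R0 \<Longrightarrow> (x', y') \<in> R0 \<Longrightarrow> \<bar>mdist P x x' - mdist TT y y'\<bar> \<le> 2 * r"
    by (rule R0_dis)
qed

abbreviation "SW \<equiv> mspace P <+> AT"
abbreviation "gW \<equiv> gl P TT R0 r"

lemma gW_metric: "Metric_space SW gW"
  using W.gl_metric unfolding TT_space .

lemma cross:
  assumes x: "x \<in> mspace P" and a: "a \<in> AT"
  shows "\<bar>Cr P TT R0 r x a - \<delta> (\<phi> x) (pT a)\<bar> \<le> 2*r"
proof -
  define a' where "a' = (if pT a = \<phi> x then a else \<phi> x)"
  have a'R: "(x, a') \<in> R0" unfolding R0_def a'_def using x a phi_AT pT_phi by auto
  have up: "Cr P TT R0 r x a \<le> r + \<delta> (\<phi> x) (pT a)"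
  proof -
    have "Cr P TT R0 r x a \<le> mdist P x x + r + mdist TT a' a" by (rule Cr_le[OF _ a'R]) (use rpos in simp)
    also have "\<dots> = r + rhoT a' a" using x unfolding TT_dist by simp
    also have "\<dots> \<le> r + \<delta> (\<phi> x) (pT a)"
    proof (cases "pT a = \<phi> x")
      case True
      hence "rhoT a' a = 0" unfolding a'_def rhoT_def by simp
      thus ?thesis by simp
    next
      case False
      hence "rhoT a' a = \<delta> (pT (\<phi> x)) (pT a)" unfolding a'_def using rhoT_ne pT_phi[OF x] by auto
      thus ?thesis using pT_phi[OF x] by simp
    qed
    finally show ?thesis .
  qed
  have lo: "\<delta> (\<phi> x) (pT a) - r \<le> Cr P TT R0 r x a"
  proof (rule Cr_ge[OF W.Rne])
    fix x' a'' assume h: "(x', a'') \<in> R0"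
    hence h': "x' \<in> mspace P" "a'' \<in> AT" "\<phi> x' = pT a''" unfolding R0_def by auto
    have 1: "\<delta> (\<phi> x) (\<phi> x') - 2*r \<le> mdist P x x'" using gb[OF x h'(1)] by linarith
    have 2: "\<delta> (\<phi> x') (pT a) \<le> mdist TT a'' a" unfolding TT_dist using rhoT_ge[OF h'(2), of a] h'(3) by simp
    have 3: "\<delta> (\<phi> x) (pT a) \<le> \<delta> (\<phi> x) (\<phi> x') + \<delta> (\<phi> x') (pT a)"
      using mdist_triangle[where m=M and x="\<phi> x" and y="\<phi> x'" and z="pT a"] phiM[OF x] phiM[OF h'(1)] pT_M[OF a] by simp
    show "\<delta> (\<phi> x) (pT a) - r \<le> mdist P x x' + r + mdist TT a'' a" using 1 2 3 by linarith
  qed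
  show ?thesis using up lo rpos by linarith
qed

definition chi where "chi u = (case u of Inl x \<Rightarrow> \<phi> x | Inr a \<Rightarrow> pT a)"
definition pi1 where "pi1 u = (case u of Inl x \<Rightarrow> x | Inr a \<Rightarrow> rep (pT a))"
definition pi2 where "pi2 u = (case u of Inl x \<Rightarrow> \<phi> x | Inr a \<Rightarrow> a)"
definition e1 where "e1 u v = mdist P (pi1 u) (pi1 v)"
definition e2 where "e2 u v = rhoT (pi2 u) (pi2 v)"

lemma pi1: "u \<in> SW \<Longrightarrow> pi1 u \<in> mspace P \<and> \<phi> (pi1 u) = chi u"
  unfolding pi1_def chi_def using rep pT_M by (auto split: sum.splits)

lemma pi2: "u \<in> SW \<Longrightarrow> pi2 u \<in> AT \<and> pT (pi2 u) = chi u"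
  unfolding pi2_def chi_def using phi_AT pT_phi by (auto split: sum.splits)

lemma chiM: "u \<in> SW \<Longrightarrow> chi u \<in> mspace M"
  using pi2 pT_M by metis

lemma F1: "u \<in> SW \<Longrightarrow> v \<in> SW \<Longrightarrow> \<bar>gW u v - \<delta> (chi u) (chi v)\<bar> \<le> 2*r"
proof (cases u; cases v)
  fix x y assume "u \<in> SW" "v \<in> SW" "u = Inl x" "v = Inl y"
  thus ?thesis using gb unfolding chi_def by auto
next
  fix x a assume "u \<in> SW" "v \<in> SW" "u = Inl x" "v = Inr a"
  thus ?thesis using cross unfolding chi_def by auto
next
  fix x a assume "u \<in> SW" "v \<in> SW" "u = Inr a" "v = Inl x"
  thus ?thesis using cross[of x a] unfolding chi_def by (auto simp: mdist_commute[of M "pT a" "\<phi> x"])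
next
  fix a b assume "u \<in> SW" "v \<in> SW" "u = Inr a" "v = Inr b"
  thus ?thesis using goodTT unfolding chi_def good_def TT_space by (auto simp: TT_dist)
qed

lemma F2: "u \<in> SW \<Longrightarrow> v \<in> SW \<Longrightarrow> \<bar>e1 u v - \<delta> (chi u) (chi v)\<bar> \<le> 2*r"
  unfolding e1_def using gb pi1 by metis

lemma F3: "u \<in> SW \<Longrightarrow> v \<in> SW \<Longrightarrow> \<bar>e2 u v - \<delta> (chi u) (chi v)\<bar> \<le> 2*r"
proof -
  assume "u \<in> SW" "v \<in> SW"
  hence "pi2 u \<in> AT" "pi2 v \<in> AT" "pT (pi2 u) = chi u" "pT (pi2 v) = chi v" using pi2 by auto
  thus ?thesis using goodTT unfolding e2_def good_def TT_space TT_dist by metis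
qed

lemma pm1: "pm SW e1"
  unfolding e1_def by (rule pm_pull[OF Metric_space_mspace_mdist]) (use pi1 in blast)

lemma pm2: "pm SW e2"
  unfolding e2_def by (rule pm_pull[OF rhoT_metric]) (use pi2 in blast)

end

context GHP
begin

definition Dt where "Dt t u v = aa t * gW u v + bb t * e1 u v + cc t * e2 u v"
definition beta where "beta t = (if t = 0 then P else if t = 1 then TT else mk SW (Dt t))"
definition kap where "kap t u = (if t = 0 then pi1 u else if t = 1 then pi2 u else hh u)"

lemma Dt_metric: "0 < t \<Longrightarrow> t < 1 \<Longrightarrow> Metric_space SW (Dt t)"
  unfolding Dt_def[abs_def]
  by (rule conv3[OF gW_metric pm1 pm2 coef_pos]) (use coef in auto)

lemma K:
  assumes t: "0 \<le> t" "t \<le> 1" and u: "u \<in> SW" and v: "v \<in> SW"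
  shows "kap t u \<in> mspace (beta t) \<and> mdist (beta t) (kap t u) (kap t v) = Dt t u v"
proof (cases "t = 0")
  case True
  thus ?thesis unfolding beta_def kap_def Dt_def using pi1[OF u] coef0 by (simp add: e1_def)
next
  case t0: False
  show ?thesis
  proof (cases "t = 1")
    case True
    thus ?thesis unfolding beta_def kap_def Dt_def using pi2[OF u] coef1 by (simp add: e2_def TT_space TT_dist)
  next
    case False
    hence "0 < t" "t < 1" using t t0 by auto
    note mm = mk_metric[OF Dt_metric[OF this]]
    show ?thesis unfolding beta_def kap_def using t0 False mm u by simp
  qed
qed

lemma Ksurj:
  assumes t: "0 \<le> t" "t \<le> 1" and w: "w \<in> mspace (beta t)"
  shows "\<exists>u\<in>SW. kap t u = w"
proof (cases "t = 0")
  case True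
  hence "w \<in> mspace P" using w unfolding beta_def by simp
  thus ?thesis using True unfolding kap_def pi1_def by (intro bexI[of _ "Inl w"]) auto
next
  case t0: False
  show ?thesis
  proof (cases "t = 1")
    case True
    hence "w \<in> AT" using w t0 unfolding beta_def by (simp add: TT_space)
    thus ?thesis using True unfolding kap_def pi2_def by (intro bexI[of _ "Inr w"]) auto
  next
    case False
    hence "0 < t" "t < 1" using t t0 by auto
    note mm = mk_metric[OF Dt_metric[OF this]]
    have "w \<in> hh ` SW" using w t0 False mm unfolding beta_def by simp
    thus ?thesis unfolding kap_def using t0 False by auto
  qed
qed

lemma Dchi:
  assumes t: "0 \<le> t" "t \<le> 1" and u: "u \<in> SW" and v: "v \<in> SW"
  shows "\<bar>Dt t u v - \<delta> (chi u) (chi v)\<bar> \<le> 2*r"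
proof -
  let ?d = "\<delta> (chi u) (chi v)"
  have c: "0 \<le> aa t" "0 \<le> bb t" "0 \<le> cc t" "aa t + bb t + cc t = 1" using coef[OF t] by auto
  have f1: "?d - 2*r \<le> gW u v" "gW u v \<le> ?d + 2*r" using F1[OF u v] by linarith+
  have f2: "?d - 2*r \<le> e1 u v" "e1 u v \<le> ?d + 2*r" using F2[OF u v] by linarith+
  have f3: "?d - 2*r \<le> e2 u v" "e2 u v \<le> ?d + 2*r" using F3[OF u v] by linarith+
  have "aa t * (?d - 2*r) \<le> aa t * gW u v" "aa t * gW u v \<le> aa t * (?d + 2*r)"
    using f1 c by (simp_all add: mult_left_mono)
  moreover have "bb t * (?d - 2*r) \<le> bb t * e1 u v" "bb t * e1 u v \<le> bb t * (?d + 2*r)"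
    using f2 c by (simp_all add: mult_left_mono)
  moreover have "cc t * (?d - 2*r) \<le> cc t * e2 u v" "cc t * e2 u v \<le> cc t * (?d + 2*r)"
    using f3 c by (simp_all add: mult_left_mono)
  moreover have "aa t * (?d - 2*r) + bb t * (?d - 2*r) + cc t * (?d - 2*r) = ?d - 2*r"
    "aa t * (?d + 2*r) + bb t * (?d + 2*r) + cc t * (?d + 2*r) = ?d + 2*r"
    by (simp_all only: distrib_right[symmetric] c(4) mult_1)
  ultimately show ?thesis unfolding Dt_def by linarith
qed

lemma Dlip:
  assumes u: "u \<in> SW" and v: "v \<in> SW"
  shows "\<bar>Dt t u v - Dt t' u v\<bar> \<le> 16*r*\<bar>t - t'\<bar>"
proof -
  have eq: "Dt s u v = gW u v + bb s * (e1 u v - gW u v) + cc s * (e2 u v - gW u v)" for s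
    unfolding Dt_def aa_def by (simp add: algebra_simps)
  have b1: "\<bar>e1 u v - gW u v\<bar> \<le> 4*r" using F1[OF u v] F2[OF u v] by linarith
  have b2: "\<bar>e2 u v - gW u v\<bar> \<le> 4*r" using F1[OF u v] F3[OF u v] by linarith
  have "Dt t u v - Dt t' u v = (bb t - bb t') * (e1 u v - gW u v) + (cc t - cc t') * (e2 u v - gW u v)"
    unfolding eq by (simp add: algebra_simps)
  hence "\<bar>Dt t u v - Dt t' u v\<bar> \<le> \<bar>bb t - bb t'\<bar> * \<bar>e1 u v - gW u v\<bar> + \<bar>cc t - cc t'\<bar> * \<bar>e2 u v - gW u v\<bar>"
    by (simp add: abs_mult[symmetric] abs_triangle_ineq)
  also have "\<dots> \<le> (2*\<bar>t - t'\<bar>) * (4*r) + (2*\<bar>t - t'\<bar>) * (4*r)"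
    by (rule add_mono; rule mult_mono) (use coef_lip b1 b2 in auto)
  finally show ?thesis by (simp add: algebra_simps)
qed

end

context GHP
begin

lemma Dt_LL: "x \<in> mspace P \<Longrightarrow> x' \<in> mspace P \<Longrightarrow>
   Dt t (Inl x) (Inl x') = aa t * mdist P x x' + bb t * mdist P x x' + cc t * rhoT (\<phi> x) (\<phi> x')"
  unfolding Dt_def e1_def e2_def pi1_def pi2_def by simp

lemma interior:
  assumes "0 < t" "t < 1"
  shows "mspace (beta t) = hh ` SW" "\<And>u v. mdist (beta t) (hh u) (hh v) = Dt t u v"
proof -
  have "t \<noteq> 0" "t \<noteq> 1" using assms by auto
  hence b: "beta t = mk SW (Dt t)" unfolding beta_def by simp
  note mm = mk_metric[OF Dt_metric[OF assms]]
  show "mspace (beta t) = hh ` SW" "\<And>u v. mdist (beta t) (hh u) (hh v) = Dt t u v" unfolding b using mm by auto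
qed

lemma cms_beta:
  assumes t: "0 \<le> t" "t \<le> 1"
  shows "cms (beta t)"
proof (cases "t = 0 \<or> t = 1")
  case True
  thus ?thesis using cmsP cmsTT unfolding beta_def by auto
next
  case False
  hence tt: "0 < t" "t < 1" using t by auto
  let ?X = "beta t"
  note I = interior[OF tt]
  have cont: "continuous_map (mtopology_of P) (mtopology_of ?X) (hh \<circ> Inl)"
    unfolding mtopology_of_def
  proof (subst Metric_space.metric_continuous_map[OF Metric_space_mspace_mdist Metric_space_mspace_mdist], intro conjI ballI allI impI)
    show "(hh \<circ> Inl) ` mspace P \<subseteq> mspace ?X" unfolding I by auto
    fix a \<epsilon> assume a: "a \<in> mspace P" and e: "(0::real) < \<epsilon>"
    show "\<exists>\<delta>>0. \<forall>x. x \<in> mspace P \<and> mdist P a x < \<delta> \<longrightarrow> mdist ?X ((hh \<circ> Inl) a) ((hh \<circ> Inl) x) < \<epsilon>"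
    proof (intro exI conjI allI impI)
      show "0 < min \<epsilon> (s_inv M - 2*r)" using e r4s rpos by simp
      fix x assume x: "x \<in> mspace P \<and> mdist P a x < min \<epsilon> (s_inv M - 2*r)"
      hence "\<phi> a = \<phi> x" using same_close a by simp
      hence "rhoT (\<phi> a) (\<phi> x) = 0" unfolding rhoT_def by simp
      hence "mdist ?X ((hh \<circ> Inl) a) ((hh \<circ> Inl) x) = (aa t + bb t) * mdist P a x"
        using I(2) Dt_LL[OF a] x by (simp add: algebra_simps)
      also have "\<dots> \<le> mdist P a x"
      proof -
        have "aa t + bb t \<le> 1" "0 \<le> aa t + bb t" using coef[OF t] by linarith+
        thus ?thesis using mult_right_mono[of "aa t + bb t" 1 "mdist P a x"] by simp
      qed
      also have "\<dots> < \<epsilon>" using x by simp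
      finally show "mdist ?X ((hh \<circ> Inl) a) ((hh \<circ> Inl) x) < \<epsilon>" .
    qed
  qed
  have c1: "compactin (mtopology_of ?X) ((hh \<circ> Inl) ` mspace P)"
  proof (rule image_compactin[OF _ cont])
    show "compactin (mtopology_of P) (mspace P)" using cmsP unfolding cms_def compact_space_def by simp
  qed
  have c2: "compactin (mtopology_of ?X) ((hh \<circ> Inr) ` AT)"
    by (rule finite_imp_compactin) (use AT_finite I in auto)
  have "hh ` SW = (hh \<circ> Inl) ` mspace P \<union> (hh \<circ> Inr) ` AT" unfolding Plus_def by auto
  hence "compactin (mtopology_of ?X) (mspace ?X)" using compactin_Un[OF c1 c2] I by simp
  moreover have "mspace ?X \<noteq> {}" unfolding I using cmsP unfolding cms_def by auto
  ultimately show ?thesis unfolding cms_def compact_space_def by simp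
qed

lemma beta_cont:
  assumes t: "0 \<le> t" "t \<le> 1" and t': "0 \<le> t'" "t' \<le> 1" and c: "0 < c" "16*r*\<bar>t - t'\<bar> \<le> 2*c"
  shows "dGH (beta t) (beta t') \<le> c"
proof (rule dGH_le[where R="(\<lambda>u. (kap t u, kap t' u)) ` SW"])
  show "cms (beta t)" "cms (beta t')" using cms_beta t t' by auto
  show "0 < c" by fact
  show "(\<lambda>u. (kap t u, kap t' u)) ` SW \<subseteq> mspace (beta t) \<times> mspace (beta t')"
    using K[OF t] K[OF t'] by blast
  show "\<forall>x\<in>mspace (beta t). \<exists>y. (x, y) \<in> (\<lambda>u. (kap t u, kap t' u)) ` SW"
    using Ksurj[OF t] by blast
  show "\<forall>y\<in>mspace (beta t'). \<exists>x. (x, y) \<in> (\<lambda>u. (kap t u, kap t' u)) ` SW"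
    using Ksurj[OF t'] by blast
  show "\<forall>x y x' y'. (x, y) \<in> (\<lambda>u. (kap t u, kap t' u)) ` SW \<longrightarrow> (x', y') \<in> (\<lambda>u. (kap t u, kap t' u)) ` SW \<longrightarrow>
        \<bar>mdist (beta t) x x' - mdist (beta t') y y'\<bar> \<le> 2 * c"
  proof (intro allI impI)
    fix x y x' y' assume "(x, y) \<in> (\<lambda>u. (kap t u, kap t' u)) ` SW" "(x', y') \<in> (\<lambda>u. (kap t u, kap t' u)) ` SW"
    then obtain u v where uv: "u \<in> SW" "v \<in> SW" "x = kap t u" "y = kap t' u" "x' = kap t v" "y' = kap t' v" by auto
    have "mdist (beta t) x x' = Dt t u v" "mdist (beta t') y y' = Dt t' u v"
      using K[OF t uv(1,2)] K[OF t' uv(1,2)] uv by auto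
    thus "\<bar>mdist (beta t) x x' - mdist (beta t') y y'\<bar> \<le> 2 * c" using Dlip[OF uv(1,2), of t t'] c by linarith
  qed
qed

lemma beta_sphere:
  assumes t: "0 \<le> t" "t \<le> 1"
  shows "dGH M (beta t) = r"
proof (cases "t = 0 \<or> t = 1")
  case True
  thus ?thesis using dP TT_sphere unfolding beta_def by auto
next
  case False
  hence tt: "0 < t" "t < 1" using t by auto
  let ?X = "beta t"
  note I = interior[OF tt]
  define ch where "ch w = chi (gg w)" for w
  have g: "good M ?X ch (2*r)"
    unfolding good_def I
  proof (intro conjI ballI subsetI)
    fix m assume "m \<in> ch ` hh ` SW"
    then obtain u where u: "u \<in> SW" "m = ch (hh u)" by blast
    hence "m = chi u" unfolding ch_def by simp
    thus "m \<in> mspace M" using chiM u(1) by simp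
  next
    fix m assume m: "m \<in> mspace M"
    have "Inl (rep m) \<in> SW" using rep[OF m] by auto
    moreover have "ch (hh (Inl (rep m))) = m" unfolding ch_def chi_def using rep[OF m] by simp
    ultimately show "m \<in> ch ` hh ` SW" by force
  next
    fix w w' assume "w \<in> hh ` SW" "w' \<in> hh ` SW"
    then obtain u u' where "u \<in> SW" "u' \<in> SW" "w = hh u" "w' = hh u'" by auto
    thus "\<bar>mdist ?X w w' - \<delta> (ch w) (ch w')\<bar> \<le> 2*r"
      using Dchi[OF t] I(2) unfolding ch_def by simp
  qed
  show ?thesis
  proof (rule antisym)
    show "dGH M ?X \<le> r" by (rule sph_le[OF cms_beta[OF t] g rpos])
    show "r \<le> dGH M ?X"
    proof (rule sph_ge[OF cms_beta[OF t] g])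
      fix \<rho> assume \<rho>: "\<rho> < r"
      show "\<exists>x\<in>mspace ?X. \<exists>x'\<in>mspace ?X. 2*\<rho> < \<bar>mdist ?X x x' - \<delta> (ch x) (ch x')\<bar>"
      proof (cases "t \<le> 1/2")
        case True
        obtain x x' where xx: "x \<in> mspace P" "x' \<in> mspace P" "2*\<rho> < \<bar>mdist P x x' - \<delta> (\<phi> x) (\<phi> x')\<bar>"
          using witness_of[OF cmsP dP gP \<rho>] by blast
        have c: "cc t = 0" "aa t + bb t = 1" using coef_lo[OF True] coef[OF t] by auto
        have "mdist ?X (hh (Inl x)) (hh (Inl x')) = mdist P x x'"
          using I(2) Dt_LL[OF xx(1,2), of t] c by (simp add: distrib_right[symmetric])
        moreover have "ch (hh (Inl x)) = \<phi> x" "ch (hh (Inl x')) = \<phi> x'" unfolding ch_def chi_def by simp_all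
        moreover have "hh (Inl x) \<in> mspace ?X" "hh (Inl x') \<in> mspace ?X" unfolding I using xx by auto
        ultimately show ?thesis using xx(3) by metis
      next
        case False
        have c: "bb t = 0" "aa t + cc t = 1" using coef_hi[of t] False coef[OF t] by auto
        have zA: "zz \<in> AT" "m1 \<in> AT" unfolding AT_def using m1M by auto
        have "Dt t (Inr zz) (Inr m1) = aa t * rhoT zz m1 + cc t * rhoT zz m1"
          unfolding Dt_def e2_def pi2_def using c by (simp add: TT_dist)
        also have "\<dots> = 2*r" using c zz_m1 by (simp add: distrib_right[symmetric])
        finally have d: "mdist ?X (hh (Inr zz)) (hh (Inr m1)) = 2*r" using I(2) by simp
        have "ch (hh (Inr zz)) = m1" "ch (hh (Inr m1)) = m1" unfolding ch_def chi_def using zz_m1 by simp_all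
        hence "2*\<rho> < \<bar>mdist ?X (hh (Inr zz)) (hh (Inr m1)) - \<delta> (ch (hh (Inr zz))) (ch (hh (Inr m1)))\<bar>"
          using d m1M \<rho> rpos by simp
        moreover have "hh (Inr zz) \<in> mspace ?X" "hh (Inr m1) \<in> mspace ?X" unfolding I using zA by auto
        ultimately show ?thesis by blast
      qed
    qed
  qed
qed

lemma beta_ends: "beta 0 = P" "beta 1 = TT"
  unfolding beta_def by auto

end

context GHS
begin

lemma path_exists:
  assumes "cms P" "dGH M P = r"
  shows "\<exists>\<beta>. \<beta> 0 = P \<and> \<beta> 1 = TT \<and> (\<forall>t. 0 \<le> t \<and> t \<le> 1 \<longrightarrow> cms (\<beta> t) \<and> dGH M (\<beta> t) = r) \<and>
     (\<forall>t t' c. 0 \<le> t \<and> t \<le> 1 \<and> 0 \<le> t' \<and> t' \<le> 1 \<and> 0 < c \<and> 16*r*\<bar>t - t'\<bar> \<le> 2*c \<longrightarrow> dGH (\<beta> t) (\<beta> t') \<le> c)"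
proof -
  obtain \<phi> where \<phi>: "good M P \<phi> (2*r)" using extract_phi[OF assms] by blast
  interpret GHP M r P \<phi> by unfold_locales (use assms \<phi> in auto)
  show ?thesis
    by (rule exI[of _ beta]) (use beta_ends cms_beta beta_sphere beta_cont in blast)
qed

end

lemma isometric_refl: "isometric X X"
  unfolding isometric_def by (rule exI[of _ id]) (simp add: bij_betw_id)

theorem corollary4:
  fixes M :: mspc and r :: real
  assumes "finite (mspace M)" and "generic M"
    and "0 < r" and "r < min (s_inv M / 4) (min (e_inv M / 4) (t_inv M / 6))"
  shows "GH_path_connected (\<lambda>Y. cms Y \<and> dGH M Y = r)"
proof -
  interpret GHS M r by unfold_locales (use assms in auto)
  show ?thesis unfolding GH_path_connected_def
  proof (intro allI impI)
    fix Y1 Y2 assume Y: "(cms Y1 \<and> dGH M Y1 = r) \<and> (cms Y2 \<and> dGH M Y2 = r)"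
    obtain \<beta>1 where b1: "\<beta>1 0 = Y1" "\<beta>1 1 = TT" "\<And>t. 0 \<le> t \<Longrightarrow> t \<le> 1 \<Longrightarrow> cms (\<beta>1 t) \<and> dGH M (\<beta>1 t) = r"
      "\<And>t t' c. 0 \<le> t \<Longrightarrow> t \<le> 1 \<Longrightarrow> 0 \<le> t' \<Longrightarrow> t' \<le> 1 \<Longrightarrow> 0 < c \<Longrightarrow> 16*r*\<bar>t - t'\<bar> \<le> 2*c \<Longrightarrow> dGH (\<beta>1 t) (\<beta>1 t') \<le> c"
      using path_exists[of Y1] Y by blast
    obtain \<beta>2 where b2: "\<beta>2 0 = Y2" "\<beta>2 1 = TT" "\<And>t. 0 \<le> t \<Longrightarrow> t \<le> 1 \<Longrightarrow> cms (\<beta>2 t) \<and> dGH M (\<beta>2 t) = r"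
      "\<And>t t' c. 0 \<le> t \<Longrightarrow> t \<le> 1 \<Longrightarrow> 0 \<le> t' \<Longrightarrow> t' \<le> 1 \<Longrightarrow> 0 < c \<Longrightarrow> 16*r*\<bar>t - t'\<bar> \<le> 2*c \<Longrightarrow> dGH (\<beta>2 t) (\<beta>2 t') \<le> c"
      using path_exists[of Y2] Y by blast
    define \<gamma> where "\<gamma> t = (if t \<le> 1/2 then \<beta>1 (2*t) else \<beta>2 (2 - 2*t))" for t
    have g_hi: "\<gamma> t = \<beta>2 (2 - 2*t)" if "1/2 \<le> t" for t
    proof (cases "t = 1/2")
      case True
      show ?thesis unfolding True \<gamma>_def using b1(2) b2(2) by simp
    next
      case False thus ?thesis unfolding \<gamma>_def using that by simp
    qed
    have g_lo: "\<gamma> t = \<beta>1 (2*t)" if "t \<le> 1/2" for t using that unfolding \<gamma>_def by simp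
    show "\<exists>\<gamma>::real \<Rightarrow> mspc. (\<forall>t\<in>{0..1}. cms (\<gamma> t) \<and> dGH M (\<gamma> t) = r) \<and>
           (\<forall>t\<in>{0..1}. \<forall>\<epsilon>>0. \<exists>\<delta>>0. \<forall>t'\<in>{0..1}. \<bar>t' - t\<bar> < \<delta> \<longrightarrow> dGH (\<gamma> t) (\<gamma> t') < \<epsilon>) \<and>
           isometric (\<gamma> 0) Y1 \<and> isometric (\<gamma> 1) Y2"
    proof -
      have P1: "\<forall>t\<in>{0..1}. cms (\<gamma> t) \<and> dGH M (\<gamma> t) = r"
      proof
        fix t :: real assume t: "t \<in> {0..1}"
        show "cms (\<gamma> t) \<and> dGH M (\<gamma> t) = r"
        proof (cases "t \<le> 1/2")
          case True thus ?thesis using g_lo b1(3)[of "2*t"] t by simp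
        next
          case False thus ?thesis using g_hi b2(3)[of "2 - 2*t"] t by simp
        qed
      qed
      have P2: "\<forall>t\<in>{0..1}. \<forall>\<epsilon>>0. \<exists>\<delta>>0. \<forall>t'\<in>{0..1}. \<bar>t' - t\<bar> < \<delta> \<longrightarrow> dGH (\<gamma> t) (\<gamma> t') < \<epsilon>"
      proof (intro ballI allI impI)
        fix t :: real and \<epsilon> :: real assume t: "t \<in> {0..1}" and e: "0 < \<epsilon>"
        define \<delta> where "\<delta> = min (\<epsilon> / (32*r)) (if t = 1/2 then 1 else \<bar>t - 1/2\<bar>)"
        have d1: "\<delta> \<le> \<epsilon> / (32*r)" unfolding \<delta>_def by simp
        have d2: "t \<noteq> 1/2 \<Longrightarrow> \<delta> \<le> \<bar>t - 1/2\<bar>" unfolding \<delta>_def by simp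
        have dpos: "0 < \<delta>" unfolding \<delta>_def using e rpos by auto
        show "\<exists>\<delta>>0. \<forall>t'\<in>{0..1}. \<bar>t' - t\<bar> < \<delta> \<longrightarrow> dGH (\<gamma> t) (\<gamma> t') < \<epsilon>"
        proof (intro exI conjI ballI impI)
          show "0 < \<delta>" by fact
          fix t' :: real assume t': "t' \<in> {0..1}" and tt: "\<bar>t' - t\<bar> < \<delta>"
          have small: "32*r*\<bar>t' - t\<bar> \<le> \<epsilon>"
          proof -
            have "\<bar>t' - t\<bar> \<le> \<epsilon> / (32*r)" using tt d1 by linarith
            hence a: "32*r*\<bar>t' - t\<bar> \<le> 32*r*(\<epsilon> / (32*r))" by (rule mult_left_mono) (use rpos in simp)
            have b: "32*r*(\<epsilon> / (32*r)) = \<epsilon>" using rpos by simp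
            show ?thesis using a b by linarith
          qed
          have "dGH (\<gamma> t) (\<gamma> t') \<le> \<epsilon>/2"
          proof (cases "t \<le> 1/2 \<and> t' \<le> 1/2")
            case True
            hence "\<gamma> t = \<beta>1 (2*t)" "\<gamma> t' = \<beta>1 (2*t')" using g_lo by auto
            moreover have "16*r*\<bar>2*t - 2*t'\<bar> \<le> 2*(\<epsilon>/2)"
            proof -
              have ab: "\<bar>2*t - 2*t'\<bar> = 2*\<bar>t' - t\<bar>" by (auto simp: abs_if)
              have "16*r*\<bar>2*t - 2*t'\<bar> = 32*r*\<bar>t' - t\<bar>" unfolding ab by simp
              thus ?thesis using small by linarith
            qed
            ultimately show ?thesis using b1(4)[of "2*t" "2*t'" "\<epsilon>/2"] t t' True e by simp
          next
            case False
            have h: "1/2 \<le> t \<and> 1/2 \<le> t'"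
            proof (cases "t = 1/2")
              case True thus ?thesis using False by auto
            next
              case ne: False
              hence "\<delta> \<le> \<bar>t - 1/2\<bar>" using d2 by simp
              thus ?thesis using False tt by auto
            qed
            hence "\<gamma> t = \<beta>2 (2 - 2*t)" "\<gamma> t' = \<beta>2 (2 - 2*t')" using g_hi by auto
            moreover have "16*r*\<bar>(2 - 2*t) - (2 - 2*t')\<bar> \<le> 2*(\<epsilon>/2)"
            proof -
              have ab: "\<bar>(2 - 2*t) - (2 - 2*t')\<bar> = 2*\<bar>t' - t\<bar>" by (auto simp: abs_if)
              have "16*r*\<bar>(2 - 2*t) - (2 - 2*t')\<bar> = 32*r*\<bar>t' - t\<bar>" unfolding ab by simp
              thus ?thesis using small by linarith
            qed
            ultimately show ?thesis using b2(4)[of "2 - 2*t" "2 - 2*t'" "\<epsilon>/2"] t t' h e by simp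
          qed
          thus "dGH (\<gamma> t) (\<gamma> t') < \<epsilon>" using e by linarith
        qed
      qed
      have P3: "isometric (\<gamma> 0) Y1" using g_lo[of 0] b1(1) isometric_refl by simp
      have P4: "isometric (\<gamma> 1) Y2" using g_hi[of 1] b2(1) isometric_refl by simp
      show ?thesis using P1 P2 P3 P4 by blast
    qed
  qed
qed


end
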